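(* Let $\gamma:\mathbb{R}\to\mathbb{R}^{nN}$ be a solution of $\dot p=\sum_{m\in\Lambda}u_m(t)X_m(p)$. Then for all $t_0,t\in\mathbb{R}$, \[ \psi(\gamma(t))=\psi(\gamma(t_0))+\int_{t_0}^t(Y\psi)(\gamma(s))\,\mathrm{d}s-(D_1\psi)(t_0,\gamma(t_0))+(D_1\psi)(t,\gamma(t))+\int_{t_0}^t(D_2\psi)(s,\gamma(s))\,\mathrm{d}s, \] where \[ (D_1\psi)(s,p)=-\sum_{m_1\in\Lambda}\widetilde{UV}_{m_1}(s)(X_{m_1}\psi)(p)-\sum_{m_1,m_2\in\Lambda}\widetilde{UV}_{m_2,m_1}(s)\,(X_{m_2}(X_{m_1}\psi))(p), \] \[ (D_2\psi)(s,p)=\sum_{m_1,m_2,m_3\in\Lambda}u_{m_3}(s)\,\widetilde{UV}_{m_2,m_1}(s)\,(X_{m_3}(X_{m_2}(X_{m_1}\psi)))(p). \]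
   Context: $G=(V,E)$ is an undirected graph with $V=\{1,\ldots,N\}$ and nonempty edge set $E$ of two-element subsets (edges $ij$); $d_{ij}\geq0$ for $ij\in E$. For $p=(p_1,\ldots,p_N)\in\mathbb{R}^{nN}$: $\psi_i(p)=\frac14\sum_{j:\,ij\in E}(\|p_j-p_i\|^2-d_{ij}^2)^2$ and $\psi(p)=\frac14\sum_{ij\in E}(\|p_j-p_i\|^2-d_{ij}^2)^2$. For each $i$, $b_{i,1},\ldots,b_{i,n}$ is an orthonormal basis of $\mathbb{R}^n$; $B_{i,k}$ is the constant vector field on $\mathbb{R}^{nN}$ with $i$-th block $b_{i,k}$ and other blocks $0$. $\Lambda$ is the set of triples $m=(i,k,\nu)$ with $i\in\{1,\ldots,N\}$, $k\in\{1,\ldots,n\}$, $\nu\in\{1,2\}$; $X_m(p):=h_\nu(\psi_i(p))B_{i,k}(p)$. The functions $h_1,h_2:\mathbb{R}\to\mathbb{R}$ satisfy, for $\nu=1,2$: (i) $h_\nu(y)=0$ for $y\leq 0$; (ii) $h_\nu$ is bounded and of class $C^2$ on $(0,\infty)$; (iii) $h_\nu(y)/y$ remains bounded as $y\downarrow 0$; (iv) $h_\nu'(y)$ remains bounded as $y\downarrow0$; (v) $h_\nu''(y)\,y$ remains bounded as $y\downarrow 0$; (vi) there exist $r',c'>0$ with $h_2'(y)h_1(y)-h_1'(y)h_2(y)\leq -c'y$ for all $y\in(0,r']$. (With these, $X_m$, $X_{m_1}\psi$, $X_{m_2}(X_{m_1}\psi)$ are of class $C^1$, $C^2$, $C^1$,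 and $X_{m_3}(X_{m_2}(X_{m_1}\psi))$ is continuous; $Xf=\mathrm{D}f\,X$ denotes Lie derivative.) The $\omega_{i,k}$ are $nN$ pairwise distinct positive reals, $\varphi_{i,k}\in\mathbb{R}$, and $u_{(i,k,1)}(t)=\sqrt{\omega_{i,k}}\cos(\omega_{i,k}t+\varphi_{i,k})$, $u_{(i,k,2)}(t)=\sqrt{\omega_{i,k}}\sin(\omega_{i,k}t+\varphi_{i,k})$. For $m=(i,k,\nu)$ let $\Omega(m)=\{\omega_{i,k},-\omega_{i,k}\}$, and $\eta_{\pm\omega_{i,k},m}=\sqrt{\omega_{i,k}}e^{\pm\mathrm{i}\varphi_{i,k}}/2$ if $\nu=1$, $\eta_{\pm\omega_{i,k},m}=\pm\sqrt{\omega_{i,k}}e^{\pm\mathrm{i}\varphi_{i,k}}/(2\mathrm{i})$ if $\nu=2$ (so $u_m(t)=\sum_{\omega\in\Omega(m)}\eta_{\omega,m}e^{\mathrm{i}\omega t}$). Define $\widetilde{UV}_m(t)=-\sum_{\omega\in\Omega(m)}\frac{\eta_{\omega,m}}{\mathrm{i}\omega}e^{\mathrm{i}\omega t}$ and $\widetilde{UV}_{m',m}(t)=\sum_{(\omega',\omega)\in\Omega(m')\times\Omega(m),\,\omega'+\omega\neq0}\frac{\eta_{\omega',m'}\eta_{\omega,m}}{\mathrm{i}^2\omega(\omega'+\omega)}e^{\mathrm{i}(\omega'+\omega)t}$. Finally $Y=\frac12\sum_{i=1}^N\sum_{k=1}^n[X_{(i,k,1)},X_{(i,k,2)}]$ with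 Lie bracket $[X,Z]=\mathrm{D}Z\,X-\mathrm{D}X\,Z$, and $Y\psi=\mathrm{D}\psi\,Y$. *)

theory Defs
  imports "HOL-Analysis.Analysis"
begin

(* Points p in R^{nN} are elements of (real^'n)^'N: block p$i is the position of vertex i.
   Vertices = the finite type 'N, coordinates/basis indices k = the finite type 'n. *)

definition Lambda :: "('N::finite \<times> 'n::finite \<times> nat) set" where
  "Lambda = UNIV \<times> UNIV \<times> {1,2}"

definition edge_dist2 :: "(real^'n::finite)^'N::finite \<Rightarrow> 'N set \<Rightarrow> real" where
  "edge_dist2 p e = (SOME r. \<exists>i j. e = {i,j} \<and> r = (norm (p$j - p$i))\<^sup>2)"

definition psi_i :: "'N set set \<Rightarrow> ('N set \<Rightarrow> real) \<Rightarrow> (real^'n::finite)^'N::finite \<Rightarrow> 'N \<Rightarrow> real" where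
  "psi_i E d p i = (1/4) * (\<Sum>j\<in>{j. {i,j} \<in> E}. ((norm (p$j - p$i))\<^sup>2 - (d {i,j})\<^sup>2)\<^sup>2)"

definition psi :: "'N set set \<Rightarrow> ('N set \<Rightarrow> real) \<Rightarrow> (real^'n::finite)^'N::finite \<Rightarrow> real" where
  "psi E d p = (1/4) * (\<Sum>e\<in>E. (edge_dist2 p e - (d e)\<^sup>2)\<^sup>2)"

definition Bvec :: "('N::finite \<Rightarrow> 'n::finite \<Rightarrow> real^'n) \<Rightarrow> 'N \<Rightarrow> 'n \<Rightarrow> (real^'n)^'N" where
  "Bvec b i k = (\<chi> j. if j = i then b i k else 0)"

definition Xf :: "(nat \<Rightarrow> real \<Rightarrow> real) \<Rightarrow> ('N::finite \<Rightarrow> 'n::finite \<Rightarrow> real^'n) \<Rightarrow> 'N set set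
    \<Rightarrow> ('N set \<Rightarrow> real) \<Rightarrow> ('N \<times> 'n \<times> nat) \<Rightarrow> (real^'n)^'N \<Rightarrow> (real^'n)^'N" where
  "Xf h b E d m p = (case m of (i,k,\<nu>) \<Rightarrow> h \<nu> (psi_i E d p i) *\<^sub>R Bvec b i k)"

definition lie :: "('a::real_normed_vector \<Rightarrow> 'a) \<Rightarrow> ('a \<Rightarrow> real) \<Rightarrow> 'a \<Rightarrow> real" where
  "lie X f p = frechet_derivative f (at p) (X p)"

definition lie_bracket :: "('a::real_normed_vector \<Rightarrow> 'a) \<Rightarrow> ('a \<Rightarrow> 'a) \<Rightarrow> 'a \<Rightarrow> 'a" where
  "lie_bracket X Z p = frechet_derivative Z (at p) (X p) - frechet_derivative X (at p) (Z p)"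

definition Yf :: "(nat \<Rightarrow> real \<Rightarrow> real) \<Rightarrow> ('N::finite \<Rightarrow> 'n::finite \<Rightarrow> real^'n) \<Rightarrow> 'N set set
    \<Rightarrow> ('N set \<Rightarrow> real) \<Rightarrow> (real^'n)^'N \<Rightarrow> (real^'n)^'N" where
  "Yf h b E d p = (1/2) *\<^sub>R (\<Sum>i\<in>UNIV. \<Sum>k\<in>UNIV.
      lie_bracket (Xf h b E d (i,k,1)) (Xf h b E d (i,k,2)) p)"

definition u :: "('N \<Rightarrow> 'n \<Rightarrow> real) \<Rightarrow> ('N \<Rightarrow> 'n \<Rightarrow> real) \<Rightarrow> ('N \<times> 'n \<times> nat) \<Rightarrow> real \<Rightarrow> real" where
  "u \<omega> \<phi> m t = (case m of (i,k,\<nu>) \<Rightarrow>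
     (if \<nu> = 1 then sqrt (\<omega> i k) * cos (\<omega> i k * t + \<phi> i k)
      else sqrt (\<omega> i k) * sin (\<omega> i k * t + \<phi> i k)))"

definition Omega :: "('N \<Rightarrow> 'n \<Rightarrow> real) \<Rightarrow> ('N \<times> 'n \<times> nat) \<Rightarrow> real set" where
  "Omega \<omega> m = (case m of (i,k,\<nu>) \<Rightarrow> {\<omega> i k, - \<omega> i k})"

definition eta :: "('N \<Rightarrow> 'n \<Rightarrow> real) \<Rightarrow> ('N \<Rightarrow> 'n \<Rightarrow> real) \<Rightarrow> real \<Rightarrow> ('N \<times> 'n \<times> nat) \<Rightarrow> complex" where
  "eta \<omega> \<phi> w m = (case m of (i,k,\<nu>) \<Rightarrow>
     (if \<nu> = 1 then complex_of_real (sqrt (\<omega> i k)) * exp (\<i> * complex_of_real (sgn w * \<phi> i k)) / 2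
      else complex_of_real (sgn w) * complex_of_real (sqrt (\<omega> i k))
             * exp (\<i> * complex_of_real (sgn w * \<phi> i k)) / (2 * \<i>)))"

definition UV1 :: "('N \<Rightarrow> 'n \<Rightarrow> real) \<Rightarrow> ('N \<Rightarrow> 'n \<Rightarrow> real) \<Rightarrow> ('N \<times> 'n \<times> nat) \<Rightarrow> real \<Rightarrow> complex" where
  "UV1 \<omega> \<phi> m t = - (\<Sum>w\<in>Omega \<omega> m.
      eta \<omega> \<phi> w m / (\<i> * complex_of_real w) * exp (\<i> * complex_of_real (w * t)))"

definition UV2 :: "('N \<Rightarrow> 'n \<Rightarrow> real) \<Rightarrow> ('N \<Rightarrow> 'n \<Rightarrow> real) \<Rightarrow> ('N \<times> 'n \<times> nat) \<Rightarrow> ('N \<times> 'n \<times> nat)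
    \<Rightarrow> real \<Rightarrow> complex" where
  "UV2 \<omega> \<phi> m' m t = (\<Sum>(w',w)\<in>{(w',w). w' \<in> Omega \<omega> m' \<and> w \<in> Omega \<omega> m \<and> w' + w \<noteq> 0}.
      eta \<omega> \<phi> w' m' * eta \<omega> \<phi> w m / (\<i>\<^sup>2 * complex_of_real w * complex_of_real (w' + w))
      * exp (\<i> * complex_of_real ((w' + w) * t)))"

definition D1psi where
  "D1psi h b E d \<omega> \<phi> s p =
     - (\<Sum>m1\<in>Lambda. UV1 \<omega> \<phi> m1 s * complex_of_real (lie (Xf h b E d m1) (psi E d) p))
     - (\<Sum>m1\<in>Lambda. \<Sum>m2\<in>Lambda. UV2 \<omega> \<phi> m2 m1 s *
          complex_of_real (lie (Xf h b E d m2) (lie (Xf h b E d m1) (psi E d)) p))"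

definition D2psi where
  "D2psi h b E d \<omega> \<phi> s p =
     (\<Sum>m1\<in>Lambda. \<Sum>m2\<in>Lambda. \<Sum>m3\<in>Lambda.
        complex_of_real (u \<omega> \<phi> m3 s) * UV2 \<omega> \<phi> m2 m1 s *
        complex_of_real (lie (Xf h b E d m3) (lie (Xf h b E d m2) (lie (Xf h b E d m1) (psi E d))) p))"

definition C2_pos :: "(real \<Rightarrow> real) \<Rightarrow> bool" where
  "C2_pos f \<longleftrightarrow> (\<forall>y>0. f differentiable (at y) \<and> deriv f differentiable (at y))
      \<and> continuous_on {0<..} (deriv (deriv f))"

end

theory Submission
  imports Defs
begin


lemma has_derivative_vec_nth_comp[derivative_intros]:
  "(f has_derivative f') F \<Longrightarrow> ((\<lambda>x. f x $ j) has_derivative (\<lambda>x. f' x $ j)) F"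
  by (rule bounded_linear.has_derivative[OF bounded_linear_vec_nth])

lemma deriv_zero_quad:
  fixes f :: "'a::real_normed_vector \<Rightarrow> real"
  assumes f0: "f p = 0" and ev: "eventually (\<lambda>x. \<bar>f x\<bar> \<le> K * (norm (x - p))\<^sup>2) (at p)"
  shows "(f has_derivative (\<lambda>v. 0)) (at p)"
proof -
  have "((\<lambda>y. norm (f y - f p - 0) / norm (y - p)) \<longlongrightarrow> 0) (at p)"
  proof (rule Lim_null_comparison[where g="\<lambda>y. \<bar>K\<bar> * norm (y-p)"])
    show "\<forall>\<^sub>F x in at p. norm (norm (f x - f p - 0) / norm (x - p)) \<le> \<bar>K\<bar> * norm (x - p)"
      using ev
    proof (rule eventually_mono)
      fix x assume a: "\<bar>f x\<bar> \<le> K * (norm (x - p))\<^sup>2"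
      show "norm (norm (f x - f p - 0) / norm (x - p)) \<le> \<bar>K\<bar> * norm (x - p)"
      proof (cases "x = p")
        case True then show ?thesis by simp
      next
        case False
        then have n: "norm (x - p) > 0" by simp
        have "\<bar>f x\<bar> \<le> \<bar>K\<bar> * norm (x - p) * norm (x - p)"
          using a by (smt (verit, best) mult_right_mono n power2_eq_square mult.assoc abs_ge_self)
        then show ?thesis using n f0 by (simp add: divide_le_eq)
      qed
    qed
    show "((\<lambda>y. \<bar>K\<bar> * norm (y - p)) \<longlongrightarrow> 0) (at p)"
      by (rule tendsto_eq_intros refl | simp)+
  qed
  then show ?thesis by (simp add: has_derivative_iff_norm)
qed


lemma small_pos_bound:
  assumes "\<exists>C. eventually (\<lambda>y. \<bar>f y\<bar> \<le> C) (at_right (0::real))"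
  obtains C \<delta> where "\<delta> > 0" "\<And>y. 0 < y \<Longrightarrow> y < \<delta> \<Longrightarrow> \<bar>f y\<bar> \<le> C"
  using assms unfolding eventually_at_right_field by force

lemma ev_small:
  fixes \<Psi> :: "'a::metric_space \<Rightarrow> real"
  assumes "isCont \<Psi> p" "\<Psi> p = 0" "\<delta> > 0"
  shows "eventually (\<lambda>x. \<Psi> x < \<delta>) (at p)"
  using assms by (metis isCont_def order_tendstoD(2))

lemma comp_h_deriv:
  fixes \<Psi> :: "'a::real_normed_vector \<Rightarrow> real"
  assumes hz: "\<forall>y\<le>0. h y = 0"
   and hd: "\<forall>y>0. h differentiable (at y)"
   and hdiv: "\<exists>C. eventually (\<lambda>y. \<bar>h y / y\<bar> \<le> C) (at_right 0)"
   and nn: "\<forall>x. \<Psi> x \<ge> 0"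
   and D: "(\<Psi> has_derivative D\<Psi>) (at p)"
   and z: "\<Psi> p = 0 \<Longrightarrow> \<forall>v. D\<Psi> v = 0"
   and q: "\<Psi> p = 0 \<Longrightarrow> \<exists>K. eventually (\<lambda>x. \<Psi> x \<le> K * (norm (x - p))\<^sup>2) (at p)"
  shows "((\<lambda>x. h (\<Psi> x)) has_derivative (\<lambda>v. deriv h (\<Psi> p) * D\<Psi> v)) (at p)"
proof (cases "\<Psi> p > 0")
  case True
  then have "(h has_real_derivative deriv h (\<Psi> p)) (at (\<Psi> p))"
    using hd DERIV_deriv_iff_real_differentiable by blast
  from has_derivative_compose[OF D this[unfolded has_field_derivative_def]]
  show ?thesis by (simp add: mult.commute)
next
  case False
  then have p0: "\<Psi> p = 0" using nn by (simp add: order_less_le)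
  obtain C \<delta> where d: "\<delta> > 0" and Cb: "\<And>y. 0 < y \<Longrightarrow> y < \<delta> \<Longrightarrow> \<bar>h y / y\<bar> \<le> C"
    using small_pos_bound[OF hdiv] by blast
  obtain K where K: "eventually (\<lambda>x. \<Psi> x \<le> K * (norm (x - p))\<^sup>2) (at p)" using q p0 by blast
  have ct: "isCont \<Psi> p" using D has_derivative_continuous by blast
  have "((\<lambda>x. h (\<Psi> x)) has_derivative (\<lambda>v. 0)) (at p)"
  proof (rule deriv_zero_quad[where K="\<bar>C\<bar> * K"])
    show "h (\<Psi> p) = 0" using p0 hz by simp
    show "\<forall>\<^sub>F x in at p. \<bar>h (\<Psi> x)\<bar> \<le> \<bar>C\<bar> * K * (norm (x - p))\<^sup>2"
      using K ev_small[OF ct p0 d]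
    proof (eventually_elim)
      case (elim x)
      show ?case
      proof (cases "\<Psi> x = 0")
        case True
        then have "K * (norm (x - p))\<^sup>2 \<ge> 0" using elim(1) by simp
        then show ?thesis using True hz by (simp add: mult.assoc)
      next
        case False
        then have ps: "\<Psi> x > 0" using nn by (simp add: order_less_le)
        have "\<bar>h (\<Psi> x)\<bar> = \<bar>h (\<Psi> x) / \<Psi> x\<bar> * \<Psi> x" using ps by (simp add: abs_div)
        also have "\<dots> \<le> \<bar>C\<bar> * \<Psi> x" using Cb[OF ps elim(2)] ps
          by (intro mult_right_mono) auto
        also have "\<dots> \<le> \<bar>C\<bar> * (K * (norm (x - p))\<^sup>2)" using elim(1) by (intro mult_left_mono) auto
        finally show ?thesis by (simp add: mult.assoc)
      qed
    qed
  qed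
  then show ?thesis using z[OF p0] by simp
qed

lemma comp_dh_deriv:
  fixes \<Psi> :: "'a::real_normed_vector \<Rightarrow> real"
  assumes hd: "\<forall>y>0. deriv h differentiable (at y)"
   and hb: "\<exists>C. eventually (\<lambda>y. \<bar>deriv h y\<bar> \<le> C) (at_right 0)"
   and nn: "\<forall>x. \<Psi> x \<ge> 0"
   and D: "(\<Psi> has_derivative D\<Psi>) (at p)"
   and z: "\<Psi> p = 0 \<Longrightarrow> \<forall>v. D\<Psi> v = 0"
   and q: "\<Psi> p = 0 \<Longrightarrow> \<exists>K. eventually (\<lambda>x. \<Psi> x \<le> K * (norm (x - p))\<^sup>2) (at p)"
   and PD: "(P has_derivative DP) (at p)"
   and Pz: "\<Psi> p = 0 \<Longrightarrow> P p = 0 \<and> (\<forall>v. DP v = 0)"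
   and Pb: "\<Psi> p = 0 \<Longrightarrow> \<exists>K. eventually (\<lambda>x. \<bar>P x\<bar> \<le> K * \<Psi> x) (at p)"
  shows "((\<lambda>x. deriv h (\<Psi> x) * P x) has_derivative
           (\<lambda>v. deriv (deriv h) (\<Psi> p) * D\<Psi> v * P p + deriv h (\<Psi> p) * DP v)) (at p)"
proof (cases "\<Psi> p > 0")
  case True
  then have "(deriv h has_real_derivative deriv (deriv h) (\<Psi> p)) (at (\<Psi> p))"
    using hd DERIV_deriv_iff_real_differentiable by blast
  from has_derivative_compose[OF D this[unfolded has_field_derivative_def]]
  have "((\<lambda>x. deriv h (\<Psi> x)) has_derivative (\<lambda>x. deriv (deriv h) (\<Psi> p) * D\<Psi> x)) (at p)" .
  from has_derivative_mult[OF this PD]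
  show ?thesis by (simp add: algebra_simps)
next
  case False
  then have p0: "\<Psi> p = 0" using nn by (simp add: order_less_le)
  obtain C \<delta> where d: "\<delta> > 0" and Cb: "\<And>y. 0 < y \<Longrightarrow> y < \<delta> \<Longrightarrow> \<bar>deriv h y\<bar> \<le> C"
    using small_pos_bound[OF hb] by blast
  obtain K where K: "eventually (\<lambda>x. \<Psi> x \<le> K * (norm (x - p))\<^sup>2) (at p)" using q p0 by blast
  obtain K2 where K2: "eventually (\<lambda>x. \<bar>P x\<bar> \<le> K2 * \<Psi> x) (at p)" using Pb p0 by blast
  have ct: "isCont \<Psi> p" using D has_derivative_continuous by blast
  have "((\<lambda>x. deriv h (\<Psi> x) * P x) has_derivative (\<lambda>v. 0)) (at p)"
  proof (rule deriv_zero_quad[where K="\<bar>C\<bar> * \<bar>K2\<bar> * K"])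
    show "deriv h (\<Psi> p) * P p = 0" using p0 Pz by simp
    show "\<forall>\<^sub>F x in at p. \<bar>deriv h (\<Psi> x) * P x\<bar> \<le> \<bar>C\<bar> * \<bar>K2\<bar> * K * (norm (x - p))\<^sup>2"
      using K K2 ev_small[OF ct p0 d]
    proof (eventually_elim)
      case (elim x)
      have Kn: "K * (norm (x - p))\<^sup>2 \<ge> 0" using elim(1) nn[rule_format, of x] by linarith
      show ?case
      proof (cases "\<Psi> x = 0")
        case True then have "P x = 0" using elim(2) by simp
        then show ?thesis using Kn by (simp add: mult.assoc)
      next
        case False
        then have ps: "\<Psi> x > 0" using nn by (simp add: order_less_le)
        have "\<bar>deriv h (\<Psi> x) * P x\<bar> \<le> \<bar>C\<bar> * (\<bar>K2\<bar> * \<Psi> x)"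
          unfolding abs_mult using Cb[OF ps elim(3)] elim(2) ps
          by (intro mult_mono) (auto intro: order.trans[OF _ mult_right_mono[of K2 "\<bar>K2\<bar>"]])
        also have "\<dots> \<le> \<bar>C\<bar> * (\<bar>K2\<bar> * (K * (norm (x - p))\<^sup>2))" using elim(1)
          by (intro mult_left_mono) auto
        finally show ?thesis by (simp add: mult.assoc)
      qed
    qed
  qed
  then show ?thesis using z[OF p0] Pz[OF p0] by simp
qed

lemma cont_dh:
  fixes \<Psi> :: "'a::real_normed_vector \<Rightarrow> real"
  assumes hd: "\<forall>y>0. deriv h differentiable (at y)"
   and hb: "\<exists>C. eventually (\<lambda>y. \<bar>deriv h y\<bar> \<le> C) (at_right 0)"
   and nn: "\<forall>x. \<Psi> x \<ge> 0"
   and ct: "isCont \<Psi> p" and cQ: "isCont Q p"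
   and Qz: "\<forall>x. \<Psi> x = 0 \<longrightarrow> Q x = 0"
  shows "isCont (\<lambda>x. deriv h (\<Psi> x) * Q x) p"
proof (cases "\<Psi> p > 0")
  case True
  then have "isCont (deriv h) (\<Psi> p)" using hd differentiable_imp_continuous_within by blast
  then have "isCont (\<lambda>x. deriv h (\<Psi> x)) p" using ct by (rule isCont_o2[rotated])
  then show ?thesis using cQ by (intro isCont_mult)
next
  case False
  then have p0: "\<Psi> p = 0" using nn by (simp add: order_less_le)
  obtain C \<delta> where d: "\<delta> > 0" and Cb: "\<And>y. 0 < y \<Longrightarrow> y < \<delta> \<Longrightarrow> \<bar>deriv h y\<bar> \<le> C"
    using small_pos_bound[OF hb] by blast
  have Q0: "Q p = 0" using Qz p0 by simp
  have "((\<lambda>x. deriv h (\<Psi> x) * Q x) \<longlongrightarrow> 0) (at p)"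
  proof (rule Lim_null_comparison[where g="\<lambda>x. \<bar>C\<bar> * \<bar>Q x\<bar>"])
    show "\<forall>\<^sub>F x in at p. norm (deriv h (\<Psi> x) * Q x) \<le> \<bar>C\<bar> * \<bar>Q x\<bar>"
      using ev_small[OF ct p0 d]
    proof eventually_elim
      case (elim x)
      show ?case
      proof (cases "\<Psi> x = 0")
        case True then show ?thesis using Qz by simp
      next
        case False
        then have ps: "\<Psi> x > 0" using nn by (simp add: order_less_le)
        show ?thesis unfolding real_norm_def abs_mult using Cb[OF ps elim]
          by (intro mult_right_mono) auto
      qed
    qed
    have "((\<lambda>x. \<bar>C\<bar> * \<bar>Q x\<bar>) \<longlongrightarrow> \<bar>C\<bar> * \<bar>Q p\<bar>) (at p)"
      using cQ unfolding isCont_def by (intro tendsto_intros)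
    then show "((\<lambda>x. \<bar>C\<bar> * \<bar>Q x\<bar>) \<longlongrightarrow> 0) (at p)" using Q0 by simp
  qed
  then show ?thesis using Q0 by (simp add: isCont_def)
qed

lemma cont_ddh:
  fixes \<Psi> :: "'a::real_normed_vector \<Rightarrow> real"
  assumes hc: "continuous_on {0<..} (deriv (deriv h))"
   and hb: "\<exists>C. eventually (\<lambda>y. \<bar>deriv (deriv h) y * y\<bar> \<le> C) (at_right 0)"
   and nn: "\<forall>x. \<Psi> x \<ge> 0"
   and ct: "isCont \<Psi> p" and cR: "isCont R p" and cS: "isCont S p"
   and Rb: "\<forall>x. \<bar>R x\<bar> \<le> \<Psi> x * sqrt (\<Psi> x) * S x"
  shows "isCont (\<lambda>x. deriv (deriv h) (\<Psi> x) * R x) p"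
proof (cases "\<Psi> p > 0")
  case True
  then have "isCont (deriv (deriv h)) (\<Psi> p)" using hc
    by (simp add: continuous_on_eq_continuous_at)
  then have "isCont (\<lambda>x. deriv (deriv h) (\<Psi> x)) p" using ct by (rule isCont_o2[rotated])
  then show ?thesis using cR by (intro isCont_mult)
next
  case False
  then have p0: "\<Psi> p = 0" using nn by (simp add: order_less_le)
  obtain C \<delta> where d: "\<delta> > 0" and Cb: "\<And>y. 0 < y \<Longrightarrow> y < \<delta> \<Longrightarrow> \<bar>deriv (deriv h) y * y\<bar> \<le> C"
    using small_pos_bound[OF hb] by blast
  have R0: "R p = 0" using Rb[rule_format, of p] p0 by simp
  have evS: "eventually (\<lambda>x. S x < S p + 1) (at p)"
    using cS unfolding isCont_def by (intro order_tendstoD(2)) auto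
  have "((\<lambda>x. deriv (deriv h) (\<Psi> x) * R x) \<longlongrightarrow> 0) (at p)"
  proof (rule Lim_null_comparison[where g="\<lambda>x. \<bar>C\<bar> * sqrt (\<Psi> x) * \<bar>S p + 1\<bar>"])
    show "\<forall>\<^sub>F x in at p. norm (deriv (deriv h) (\<Psi> x) * R x) \<le> \<bar>C\<bar> * sqrt (\<Psi> x) * \<bar>S p + 1\<bar>"
      using ev_small[OF ct p0 d] evS
    proof eventually_elim
      case (elim x)
      show ?case
      proof (cases "\<Psi> x = 0")
        case True then have "R x = 0" using Rb[rule_format, of x] by simp
        then show ?thesis using nn by simp
      next
        case False
        then have ps: "\<Psi> x > 0" using nn by (simp add: order_less_le)
        have "0 \<le> \<Psi> x * sqrt (\<Psi> x) * S x" using Rb[rule_format, of x]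
          by (meson abs_ge_zero order_trans)
        moreover have "\<Psi> x * sqrt (\<Psi> x) > 0" using ps by simp
        ultimately have Sn: "S x \<ge> 0" by (simp add: zero_le_mult_iff)
        have "\<bar>deriv (deriv h) (\<Psi> x) * R x\<bar> \<le> \<bar>deriv (deriv h) (\<Psi> x)\<bar> * (\<Psi> x * sqrt (\<Psi> x) * S x)"
          unfolding abs_mult by (rule mult_left_mono[OF Rb[rule_format, of x] abs_ge_zero])
        also have "\<dots> = \<bar>deriv (deriv h) (\<Psi> x) * \<Psi> x\<bar> * sqrt (\<Psi> x) * S x"
          by (simp only: abs_mult abs_of_pos[OF ps] mult.assoc)
        also have "\<dots> \<le> \<bar>C\<bar> * sqrt (\<Psi> x) * \<bar>S p + 1\<bar>"
        proof -
          have a: "\<bar>deriv (deriv h) (\<Psi> x) * \<Psi> x\<bar> \<le> \<bar>C\<bar>" using Cb[OF ps elim(1)] by linarith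
          have b: "S x \<le> \<bar>S p + 1\<bar>" using elim(2) by linarith
          have c: "0 \<le> sqrt (\<Psi> x)" using ps by simp
          show ?thesis by (rule mult_mono[OF mult_right_mono[OF a c] b]) (use Sn c in simp_all)
        qed
        finally show ?thesis by simp
      qed
    qed
    have "((\<lambda>x. \<bar>C\<bar> * sqrt (\<Psi> x) * \<bar>S p + 1\<bar>) \<longlongrightarrow> \<bar>C\<bar> * sqrt (\<Psi> p) * \<bar>S p + 1\<bar>) (at p)"
      using ct unfolding isCont_def by (intro tendsto_intros)
    then show "((\<lambda>x. \<bar>C\<bar> * sqrt (\<Psi> x) * \<bar>S p + 1\<bar>) \<longlongrightarrow> 0) (at p)" using p0 by simp
  qed
  then show ?thesis using R0 by (simp add: isCont_def)
qed


definition dd :: "'N::finite \<Rightarrow> 'N \<Rightarrow> (real^'n::finite)^'N \<Rightarrow> (real^'n)^'N \<Rightarrow> real" where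
  "dd i j v w = 2 * ((v$j - v$i) \<bullet> (w$j - w$i))"

lemma dd_deriv: "((\<lambda>p. dd i j p w) has_derivative (\<lambda>z. dd i j z w)) F"
  unfolding dd_def by (auto intro!: derivative_eq_intros)

lemma dd_cont: "isCont (\<lambda>p. dd i j p w) p0"
  using dd_deriv has_derivative_continuous by blast

lemma dd_sym: "dd i j v w = dd j i v w"
  by (simp add: dd_def inner_diff_left inner_diff_right algebra_simps)

lemma dd_comm: "dd i j v w = dd i j w v"
  by (simp add: dd_def inner_commute)

lemma dd_scale2[simp]: "dd i j v (c *\<^sub>R w) = c * dd i j v w"
  by (simp add: dd_def algebra_simps flip: scaleR_diff_right)

lemma dd_scale1[simp]: "dd i j (c *\<^sub>R v) w = c * dd i j v w"
  by (simp add: dd_def algebra_simps flip: scaleR_diff_right)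

lemma lip_at:
  fixes f :: "'a::real_normed_vector \<Rightarrow> real"
  assumes "(f has_derivative f') (at p)"
  shows "\<exists>L. eventually (\<lambda>x. \<bar>f x - f p\<bar> \<le> L * norm (x - p)) (at p)"
proof -
  have bl: "bounded_linear f'" and lim: "((\<lambda>y. norm ((f y - f p) - f' (y - p)) / norm (y - p)) \<longlongrightarrow> 0) (at p)"
    using assms by (auto simp: has_derivative_iff_norm)
  obtain B where B: "\<And>x. norm (f' x) \<le> norm x * B"
    using bounded_linear.bounded[OF bl] by blast
  have "eventually (\<lambda>y. norm ((f y - f p) - f' (y - p)) / norm (y - p) < 1) (at p)"
    using lim by (rule order_tendstoD(2)) simp
  moreover have "eventually (\<lambda>y. y \<noteq> p) (at p)" by (simp add: eventually_at_filter)
  ultimately have "eventually (\<lambda>x. \<bar>f x - f p\<bar> \<le> (B + 1) * norm (x - p)) (at p)"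
  proof eventually_elim
    case (elim y)
    then have n: "norm (y - p) > 0" by simp
    have "\<bar>f y - f p - f' (y - p)\<bar> \<le> norm (y - p)"
      using elim(1) n by (simp add: divide_less_eq)
    moreover have "\<bar>f' (y - p)\<bar> \<le> norm (y - p) * B" using B[of "y - p"] by simp
    ultimately show ?case by (simp add: algebra_simps)
  qed
  then show ?thesis by blast
qed

locale Pfw =
  fixes E :: "'N::finite set set" and d :: "'N set \<Rightarrow> real" and b :: "'N \<Rightarrow> 'n::finite \<Rightarrow> real^'n"
    and h :: "nat \<Rightarrow> real \<Rightarrow> real"
  assumes E_edges: "\<forall>e\<in>E. card e = 2"
    and h_zero: "\<forall>\<nu>\<in>{1,2}. \<forall>y\<le>0. h \<nu> y = 0"
    and h_C2: "\<forall>\<nu>\<in>{1,2}. C2_pos (h \<nu>)"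
    and h_div: "\<forall>\<nu>\<in>{1,2}. \<exists>C. eventually (\<lambda>y. \<bar>h \<nu> y / y\<bar> \<le> C) (at_right 0)"
    and h_d1: "\<forall>\<nu>\<in>{1,2}. \<exists>C. eventually (\<lambda>y. \<bar>deriv (h \<nu>) y\<bar> \<le> C) (at_right 0)"
    and h_d2: "\<forall>\<nu>\<in>{1,2}. \<exists>C. eventually (\<lambda>y. \<bar>deriv (deriv (h \<nu>)) y * y\<bar> \<le> C) (at_right 0)"
begin

definition rr :: "'N \<Rightarrow> 'N \<Rightarrow> (real^'n)^'N \<Rightarrow> real" where
  "rr i j p = (norm (p$j - p$i))\<^sup>2 - (d {i,j})\<^sup>2"

definition Nb :: "'N \<Rightarrow> 'N set" where "Nb i = {j. {i,j} \<in> E}"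

definition Ps :: "'N \<Rightarrow> (real^'n)^'N \<Rightarrow> real" where
  "Ps i p = (1/4) * (\<Sum>j\<in>Nb i. (rr i j p)\<^sup>2)"
definition DPs :: "'N \<Rightarrow> (real^'n)^'N \<Rightarrow> (real^'n)^'N \<Rightarrow> real" where
  "DPs i p w = (1/2) * (\<Sum>j\<in>Nb i. rr i j p * dd i j p w)"
definition D2Ps :: "'N \<Rightarrow> (real^'n)^'N \<Rightarrow> (real^'n)^'N \<Rightarrow> (real^'n)^'N \<Rightarrow> real" where
  "D2Ps i p v w = (1/2) * (\<Sum>j\<in>Nb i. dd i j p v * dd i j p w + rr i j p * dd i j v w)"
definition D3Ps :: "'N \<Rightarrow> (real^'n)^'N \<Rightarrow> (real^'n)^'N \<Rightarrow> (real^'n)^'N \<Rightarrow> (real^'n)^'N \<Rightarrow> real" where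
  "D3Ps i p z v w = (1/2) * (\<Sum>j\<in>Nb i. dd i j z v * dd i j p w + dd i j p v * dd i j z w
      + dd i j p z * dd i j v w)"
definition SS :: "'N \<Rightarrow> (real^'n)^'N \<Rightarrow> (real^'n)^'N \<Rightarrow> real" where
  "SS i p w = (\<Sum>j\<in>Nb i. \<bar>dd i j p w\<bar>)"

lemma Ps_eq: "psi_i E d p i = Ps i p"
  by (simp add: psi_i_def Ps_def Nb_def rr_def)

lemma rr_deriv: "((\<lambda>p. rr i j p) has_derivative (\<lambda>w. dd i j p w)) (at p)"
proof -
  have e: "(\<lambda>p. rr i j p) = (\<lambda>p. (p$j - p$i) \<bullet> (p$j - p$i) - (d{i,j})\<^sup>2)"
    by (simp add: rr_def power2_norm_eq_inner fun_eq_iff)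
  show ?thesis unfolding e
    by (auto intro!: derivative_eq_intros simp: dd_def inner_commute fun_eq_iff)
qed

lemma rr_cont: "isCont (\<lambda>p. rr i j p) p"
  using rr_deriv has_derivative_continuous by blast

lemma Ps_deriv: "((\<lambda>p. Ps i p) has_derivative (\<lambda>w. DPs i p w)) (at p)"
  unfolding Ps_def DPs_def
  by (auto intro!: derivative_eq_intros rr_deriv simp: sum_distrib_left fun_eq_iff algebra_simps)

lemma DPs_deriv: "((\<lambda>p. DPs i p w) has_derivative (\<lambda>v. D2Ps i p v w)) (at p)"
  unfolding DPs_def D2Ps_def
  by (auto intro!: derivative_eq_intros rr_deriv dd_deriv simp: sum_distrib_left fun_eq_iff algebra_simps dd_comm add_divide_distrib)

lemma D2Ps_deriv: "((\<lambda>p. D2Ps i p v w) has_derivative (\<lambda>z. D3Ps i p z v w)) (at p)"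
  unfolding D2Ps_def D3Ps_def
  by (auto intro!: derivative_eq_intros rr_deriv dd_deriv simp: sum_distrib_left fun_eq_iff algebra_simps dd_comm add_divide_distrib)

end


definition ea :: "'N set \<Rightarrow> 'N" where "ea e = fst (SOME x. e = {fst x, snd x} \<and> fst x \<noteq> snd x)"
definition ec :: "'N set \<Rightarrow> 'N" where "ec e = snd (SOME x. e = {fst x, snd x} \<and> fst x \<noteq> snd x)"

lemma ea_ec: assumes "card e = 2" shows "e = {ea e, ec e} \<and> ea e \<noteq> ec e"
proof -
  have "\<exists>x y. e = {x,y} \<and> x \<noteq> y" using assms by (simp add: card_2_iff)
  then obtain a c where "a \<noteq> c" "e = {a,c}" by blast
  then have "\<exists>x. e = {fst x, snd x} \<and> fst x \<noteq> snd x" by (intro exI[of _ "(a,c)"]) simp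
  from someI_ex[OF this] show ?thesis by (simp add: ea_def ec_def)
qed

context Pfw begin

lemma finite_Nb[simp]: "finite (Nb i)" by simp
lemma finite_E[simp]: "finite E" by simp

lemma Ps_nonneg: "Ps i p \<ge> 0" unfolding Ps_def by (simp add: sum_nonneg)

lemma Ps_zero_rr: assumes "Ps i p = 0" "j \<in> Nb i" shows "rr i j p = 0"
proof -
  have "(\<Sum>j\<in>Nb i. (rr i j p)\<^sup>2) = 0" using assms by (simp add: Ps_def)
  then have "\<forall>j\<in>Nb i. (rr i j p)\<^sup>2 = 0" by (subst (asm) sum_nonneg_eq_0_iff) auto
  then show ?thesis using assms by simp
qed

lemma DPs_zero: "Ps i p = 0 \<Longrightarrow> DPs i p w = 0"
  by (simp add: DPs_def Ps_zero_rr)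

lemma rr_bound: assumes "j \<in> Nb i" shows "\<bar>rr i j p\<bar> \<le> 2 * sqrt (Ps i p)"
proof -
  have "(rr i j p)\<^sup>2 \<le> (\<Sum>j\<in>Nb i. (rr i j p)\<^sup>2)"
    using assms by (intro member_le_sum) auto
  also have "\<dots> = (2 * sqrt (Ps i p))\<^sup>2" using Ps_nonneg[of i p]
    by (simp add: power_mult_distrib Ps_def)
  finally have "\<bar>rr i j p\<bar>\<^sup>2 \<le> (2 * sqrt (Ps i p))\<^sup>2" by simp
  then show ?thesis by (rule power2_le_imp_le) (simp add: Ps_nonneg)
qed

lemma DPs_bound: "\<bar>DPs i p w\<bar> \<le> sqrt (Ps i p) * SS i p w"
proof -
  have "\<bar>\<Sum>j\<in>Nb i. rr i j p * dd i j p w\<bar> \<le> (\<Sum>j\<in>Nb i. \<bar>rr i j p * dd i j p w\<bar>)"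
    by (rule sum_abs)
  also have "\<dots> \<le> (\<Sum>j\<in>Nb i. 2 * sqrt (Ps i p) * \<bar>dd i j p w\<bar>)"
    unfolding abs_mult by (intro sum_mono mult_right_mono rr_bound) auto
  also have "\<dots> = 2 * (sqrt (Ps i p) * SS i p w)"
    by (simp add: SS_def sum_distrib_left mult.assoc)
  finally show ?thesis by (simp add: DPs_def abs_mult)
qed

lemma SS_cont: "isCont (\<lambda>p. SS i p w) p0"
  unfolding SS_def by (intro isCont_sum ballI isCont_rabs dd_cont)

lemma Ps_quad: assumes z: "Ps i p = 0"
  shows "\<exists>K. eventually (\<lambda>x. Ps i x \<le> K * (norm (x - p))\<^sup>2) (at p)"
proof -
  have "\<forall>j. \<exists>L. eventually (\<lambda>x. \<bar>rr i j x - rr i j p\<bar> \<le> L * norm (x - p)) (at p)"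
    using lip_at[OF rr_deriv] by blast
  from choice[OF this] obtain L where L: "\<And>j. eventually (\<lambda>x. \<bar>rr i j x - rr i j p\<bar> \<le> L j * norm (x - p)) (at p)"
    by blast
  have ev: "eventually (\<lambda>x. \<forall>j\<in>Nb i. \<bar>rr i j x\<bar> \<le> L j * norm (x - p)) (at p)"
  proof (rule eventually_ball_finite[OF finite_Nb], rule ballI)
    fix j assume "j \<in> Nb i"
    then have "rr i j p = 0" using Ps_zero_rr z by blast
    then show "eventually (\<lambda>x. \<bar>rr i j x\<bar> \<le> L j * norm (x - p)) (at p)" using L[of j] by simp
  qed
  have "eventually (\<lambda>x. Ps i x \<le> ((1/4) * (\<Sum>j\<in>Nb i. (L j)\<^sup>2)) * (norm (x - p))\<^sup>2) (at p)"
    using ev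
  proof eventually_elim
    case (elim x)
    have "\<And>j. j \<in> Nb i \<Longrightarrow> (rr i j x)\<^sup>2 \<le> (L j)\<^sup>2 * (norm (x - p))\<^sup>2"
    proof -
      fix j assume j: "j \<in> Nb i"
      have "\<bar>rr i j x\<bar>\<^sup>2 \<le> (L j * norm (x - p))\<^sup>2"
        using elim j by (intro power_mono) auto
      then show "(rr i j x)\<^sup>2 \<le> (L j)\<^sup>2 * (norm (x - p))\<^sup>2" by (simp add: power_mult_distrib)
    qed
    then have "(\<Sum>j\<in>Nb i. (rr i j x)\<^sup>2) \<le> (\<Sum>j\<in>Nb i. (L j)\<^sup>2 * (norm (x - p))\<^sup>2)"
      by (intro sum_mono) auto
    moreover have "(\<Sum>j\<in>Nb i. (L j)\<^sup>2 * (norm (x - p))\<^sup>2) = (\<Sum>j\<in>Nb i. (L j)\<^sup>2) * (norm (x - p))\<^sup>2"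
      by (simp add: sum_distrib_right)
    ultimately show ?case unfolding Ps_def by linarith
  qed
  then show ?thesis by blast
qed

lemma rr_sym: "rr i j p = rr j i p"
  by (simp add: rr_def norm_minus_commute insert_commute)

lemma edge_eq: assumes "e \<in> E" shows "edge_dist2 p e = (norm (p $ ec e - p $ ea e))\<^sup>2"
proof -
  have e: "e = {ea e, ec e}" using ea_ec E_edges assms by blast
  show ?thesis unfolding edge_dist2_def
  proof (rule some_equality)
    show "\<exists>i j. e = {i, j} \<and> (norm (p $ ec e - p $ ea e))\<^sup>2 = (norm (p $ j - p $ i))\<^sup>2"
      using e by blast
  next
    fix r assume "\<exists>i j. e = {i, j} \<and> r = (norm (p $ j - p $ i))\<^sup>2"
    then obtain i j where "e = {i,j}" "r = (norm (p $ j - p $ i))\<^sup>2" by blast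
    then show "r = (norm (p $ ec e - p $ ea e))\<^sup>2" using e
      by (auto simp: doubleton_eq_iff norm_minus_commute)
  qed
qed

definition Dpsi :: "(real^'n)^'N \<Rightarrow> (real^'n)^'N \<Rightarrow> real" where
  "Dpsi p w = (1/2) * (\<Sum>e\<in>E. rr (ea e) (ec e) p * dd (ea e) (ec e) p w)"

lemma psi_eq: "psi E d = (\<lambda>p. (1/4) * (\<Sum>e\<in>E. (rr (ea e) (ec e) p)\<^sup>2))"
proof
  fix p
  have "\<And>e. e \<in> E \<Longrightarrow> edge_dist2 p e - (d e)\<^sup>2 = rr (ea e) (ec e) p"
  proof -
    fix e assume a: "e \<in> E"
    then have e: "{ea e, ec e} = e" using ea_ec E_edges by metis
    show "edge_dist2 p e - (d e)\<^sup>2 = rr (ea e) (ec e) p"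
      using a by (simp add: edge_eq rr_def e)
  qed
  then show "psi E d p = (1/4) * (\<Sum>e\<in>E. (rr (ea e) (ec e) p)\<^sup>2)"
    unfolding psi_def by (simp cong: sum.cong)
qed

lemma psi_deriv: "(psi E d has_derivative Dpsi p) (at p)"
proof -
  have "((\<lambda>p. (1/4) * (\<Sum>e\<in>E. (rr (ea e) (ec e) p)\<^sup>2)) has_derivative (\<lambda>w. Dpsi p w)) (at p)"
    unfolding Dpsi_def
    by (auto intro!: derivative_eq_intros rr_deriv simp: sum_distrib_left fun_eq_iff algebra_simps)
  then show ?thesis by (simp add: psi_eq)
qed

lemma Bvec_nth: "Bvec b i k $ j = (if j = i then b i k else 0)"
  by (simp add: Bvec_def)

lemma Dpsi_B: "Dpsi p (Bvec b i k) = DPs i p (Bvec b i k)"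
proof -
  let ?B = "Bvec b i k"
  let ?T = "\<lambda>e. rr (ea e) (ec e) p * dd (ea e) (ec e) p ?B"
  have ee: "\<And>e. e \<in> E \<Longrightarrow> e = {ea e, ec e} \<and> ea e \<noteq> ec e" using ea_ec E_edges by blast
  have "(\<Sum>e\<in>E. ?T e) = (\<Sum>e\<in>E. if i \<in> e then ?T e else 0)"
  proof (rule sum.cong)
    fix e assume a: "e \<in> E"
    show "?T e = (if i \<in> e then ?T e else 0)"
    proof (cases "i \<in> e")
      case False
      then have "ea e \<noteq> i" "ec e \<noteq> i" using ee[OF a] by auto
      then show ?thesis using False by (simp add: dd_def Bvec_nth)
    qed simp
  qed simp
  also have "\<dots> = (\<Sum>e\<in>{e\<in>E. i \<in> e}. ?T e)" by (simp add: sum.inter_filter)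
  also have "\<dots> = (\<Sum>j\<in>Nb i. ?T {i,j})"
  proof (rule sum.reindex_bij_betw[symmetric])
    show "bij_betw (\<lambda>j. {i, j}) (Nb i) {e \<in> E. i \<in> e}"
    proof (rule bij_betw_imageI)
      show "inj_on (\<lambda>j. {i, j}) (Nb i)" by (auto simp: inj_on_def doubleton_eq_iff)
      show "(\<lambda>j. {i, j}) ` Nb i = {e \<in> E. i \<in> e}"
      proof
        show "(\<lambda>j. {i, j}) ` Nb i \<subseteq> {e \<in> E. i \<in> e}" by (auto simp: Nb_def)
        show "{e \<in> E. i \<in> e} \<subseteq> (\<lambda>j. {i, j}) ` Nb i"
        proof
          fix e assume a: "e \<in> {e \<in> E. i \<in> e}"
          then have e: "e = {ea e, ec e}" "e \<in> E" "i \<in> e" using ee by auto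
          show "e \<in> (\<lambda>j. {i, j}) ` Nb i"
          proof (cases "i = ea e")
            case True
            then have "e = {i, ec e}" "ec e \<in> Nb i" using e by (auto simp: Nb_def)
            then show ?thesis by blast
          next
            case False
            then have "i = ec e" using e by auto
            then have "e = {i, ea e}" using e by (simp add: insert_commute)
            then have "ea e \<in> Nb i" using e by (auto simp: Nb_def)
            then show ?thesis using \<open>e = {i, ea e}\<close> by blast
          qed
        qed
      qed
    qed
  qed
  also have "\<dots> = (\<Sum>j\<in>Nb i. rr i j p * dd i j p ?B)"
  proof (rule sum.cong)
    fix j assume "j \<in> Nb i"
    then have "{i,j} \<in> E" by (simp add: Nb_def)
    then have "{i,j} = {ea {i,j}, ec {i,j}}" using ee by blast
    then have "(ea {i,j} = i \<and> ec {i,j} = j) \<or> (ea {i,j} = j \<and> ec {i,j} = i)"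
      by (auto simp: doubleton_eq_iff)
    then show "?T {i,j} = rr i j p * dd i j p ?B"
      by (elim disjE) (simp_all add: rr_sym[of j i] dd_sym[of j i])
  qed simp
  finally show ?thesis by (simp add: Dpsi_def DPs_def)
qed

definition mi :: "'N \<times> 'n \<times> nat \<Rightarrow> 'N" where "mi m = fst m"
definition mk :: "'N \<times> 'n \<times> nat \<Rightarrow> 'n" where "mk m = fst (snd m)"
definition mn :: "'N \<times> 'n \<times> nat \<Rightarrow> nat" where "mn m = snd (snd m)"

definition BB :: "'N \<times> 'n \<times> nat \<Rightarrow> (real^'n)^'N" where "BB m = Bvec b (mi m) (mk m)"
definition Hm :: "'N \<times> 'n \<times> nat \<Rightarrow> (real^'n)^'N \<Rightarrow> real" where
  "Hm m p = h (mn m) (Ps (mi m) p)"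
definition DHm :: "'N \<times> 'n \<times> nat \<Rightarrow> (real^'n)^'N \<Rightarrow> (real^'n)^'N \<Rightarrow> real" where
  "DHm m p v = deriv (h (mn m)) (Ps (mi m) p) * DPs (mi m) p v"
definition gm :: "'N \<times> 'n \<times> nat \<Rightarrow> (real^'n)^'N \<Rightarrow> real" where
  "gm m p = DPs (mi m) p (BB m)"

lemma Xf_eq: "Xf h b E d m p = Hm m p *\<^sub>R BB m"
  by (cases m) (simp add: Xf_def Hm_def BB_def Ps_eq mi_def mk_def mn_def)

lemma hprops:
  assumes "\<nu> \<in> {1,2}"
  shows "\<forall>y\<le>0. h \<nu> y = 0" "\<forall>y>0. h \<nu> differentiable (at y)"
    "\<forall>y>0. deriv (h \<nu>) differentiable (at y)"
    "continuous_on {0<..} (deriv (deriv (h \<nu>)))"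
    "\<exists>C. eventually (\<lambda>y. \<bar>h \<nu> y / y\<bar> \<le> C) (at_right 0)"
    "\<exists>C. eventually (\<lambda>y. \<bar>deriv (h \<nu>) y\<bar> \<le> C) (at_right 0)"
    "\<exists>C. eventually (\<lambda>y. \<bar>deriv (deriv (h \<nu>)) y * y\<bar> \<le> C) (at_right 0)"
proof -
  have c: "C2_pos (h \<nu>)" using h_C2 assms by (rule bspec)
  show "\<forall>y\<le>0. h \<nu> y = 0" using h_zero assms by (rule bspec)
  show "\<forall>y>0. h \<nu> differentiable (at y)" using c unfolding C2_pos_def by simp
  show "\<forall>y>0. deriv (h \<nu>) differentiable (at y)" using c unfolding C2_pos_def by simp
  show "continuous_on {0<..} (deriv (deriv (h \<nu>)))" using c unfolding C2_pos_def by simp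
  show "\<exists>C. eventually (\<lambda>y. \<bar>h \<nu> y / y\<bar> \<le> C) (at_right 0)" using h_div assms by (rule bspec)
  show "\<exists>C. eventually (\<lambda>y. \<bar>deriv (h \<nu>) y\<bar> \<le> C) (at_right 0)" using h_d1 assms by (rule bspec)
  show "\<exists>C. eventually (\<lambda>y. \<bar>deriv (deriv (h \<nu>)) y * y\<bar> \<le> C) (at_right 0)" using h_d2 assms by (rule bspec)
qed

lemma Hm_deriv: assumes "mn m \<in> {1,2}"
  shows "((\<lambda>p. Hm m p) has_derivative (\<lambda>v. DHm m p v)) (at p)"
  unfolding Hm_def DHm_def
  by (rule comp_h_deriv[OF hprops(1,2,5)[OF assms] _ Ps_deriv])
     (auto simp: Ps_nonneg DPs_zero Ps_quad)

end


lemma ev_bound_from_cont: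
  fixes S :: "'a::metric_space \<Rightarrow> real"
  assumes "isCont S p" "\<forall>x. \<bar>P x\<bar> \<le> \<Psi> x * S x" "\<forall>x. \<Psi> x \<ge> 0"
  shows "\<exists>K. eventually (\<lambda>x. \<bar>P x\<bar> \<le> K * \<Psi> x) (at p)"
proof -
  have "eventually (\<lambda>x. S x < S p + 1) (at p)"
    using assms(1) unfolding isCont_def by (rule order_tendstoD(2)) simp
  then have "eventually (\<lambda>x. \<bar>P x\<bar> \<le> (S p + 1) * \<Psi> x) (at p)"
  proof eventually_elim
    case (elim x)
    have "\<bar>P x\<bar> \<le> \<Psi> x * S x" using assms(2) by blast
    also have "\<dots> \<le> \<Psi> x * (S p + 1)" using elim assms(3) by (intro mult_left_mono) auto
    finally show ?case by (simp add: mult.commute)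
  qed
  then show ?thesis by blast
qed

context Pfw begin

lemma Lambda_mn: "m \<in> Lambda \<Longrightarrow> mn m \<in> {1,2}"
  by (auto simp: Lambda_def mn_def)

lemma SS_nonneg: "SS i p w \<ge> 0" by (simp add: SS_def sum_nonneg)

lemma DPs_scale[simp]: "DPs i p (c *\<^sub>R w) = c * DPs i p w"
  by (simp add: DPs_def sum_distrib_left algebra_simps)
lemma D2Ps_scale1[simp]: "D2Ps i p (c *\<^sub>R v) w = c * D2Ps i p v w"
  by (simp add: D2Ps_def sum_distrib_left algebra_simps)
lemma D3Ps_scale1[simp]: "D3Ps i p (c *\<^sub>R z) v w = c * D3Ps i p z v w"
  by (simp add: D3Ps_def sum_distrib_left algebra_simps)
lemma Dpsi_scale[simp]: "Dpsi p (c *\<^sub>R w) = c * Dpsi p w"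
  by (simp add: Dpsi_def sum_distrib_left algebra_simps)
lemma DHm_scale[simp]: "DHm m p (c *\<^sub>R w) = c * DHm m p w"
  by (simp add: DHm_def)

lemma DPs_cont: "isCont (\<lambda>p. DPs i p w) p"
  using DPs_deriv has_derivative_continuous by blast
lemma D2Ps_cont: "isCont (\<lambda>p. D2Ps i p v w) p"
  using D2Ps_deriv has_derivative_continuous by blast
lemma Ps_cont: "isCont (\<lambda>p. Ps i p) p"
  using Ps_deriv has_derivative_continuous by blast
lemma D3Ps_cont: "isCont (\<lambda>p. D3Ps i p z v w) p0"
  unfolding D3Ps_def
  by (intro isCont_mult isCont_sum ballI isCont_add continuous_const dd_cont)

definition F1 where "F1 m p = Hm m p * gm m p"
definition DF1 where "DF1 m p w = DHm m p w * gm m p + Hm m p * D2Ps (mi m) p w (BB m)"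
definition PP where "PP m' m p = DPs (mi m) p (BB m') * gm m p"
definition DPP where "DPP m' m p w = D2Ps (mi m) p w (BB m') * gm m p + DPs (mi m) p (BB m') * D2Ps (mi m) p w (BB m)"
definition KK where "KK m' m p = deriv (h (mn m)) (Ps (mi m) p) * PP m' m p + Hm m p * D2Ps (mi m) p (BB m') (BB m)"
definition DK where "DK m' m p w = deriv (deriv (h (mn m))) (Ps (mi m) p) * DPs (mi m) p w * PP m' m p
   + deriv (h (mn m)) (Ps (mi m) p) * DPP m' m p w + DHm m p w * D2Ps (mi m) p (BB m') (BB m)
   + Hm m p * D3Ps (mi m) p w (BB m') (BB m)"
definition F2 where "F2 m' m p = Hm m' p * KK m' m p"
definition DF2 where "DF2 m' m p w = DHm m' p w * KK m' m p + Hm m' p * DK m' m p w"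
definition F3 where "F3 m'' m' m p = Hm m'' p * DF2 m' m p (BB m'')"

lemma DPP_scale[simp]: "DPP m' m p (c *\<^sub>R w) = c * DPP m' m p w"
  by (simp add: DPP_def algebra_simps)
lemma DK_scale[simp]: "DK m' m p (c *\<^sub>R w) = c * DK m' m p w"
  by (simp add: DK_def algebra_simps)
lemma DF1_scale[simp]: "DF1 m p (c *\<^sub>R w) = c * DF1 m p w"
  by (simp add: DF1_def algebra_simps)
lemma DF2_scale[simp]: "DF2 m' m p (c *\<^sub>R w) = c * DF2 m' m p w"
  by (simp add: DF2_def algebra_simps)

lemma gm_deriv: "((\<lambda>p. gm m p) has_derivative (\<lambda>w. D2Ps (mi m) p w (BB m))) (at p)"
  unfolding gm_def by (rule DPs_deriv)

lemma Hm_cont: "mn m \<in> {1,2} \<Longrightarrow> isCont (\<lambda>p. Hm m p) p"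
  using Hm_deriv has_derivative_continuous by blast

lemma F1_deriv: assumes "mn m \<in> {1,2}"
  shows "((\<lambda>p. F1 m p) has_derivative (\<lambda>w. DF1 m p w)) (at p)"
proof -
  have "((\<lambda>p. Hm m p * gm m p) has_derivative
      (\<lambda>w. Hm m p * D2Ps (mi m) p w (BB m) + DHm m p w * gm m p)) (at p)"
    by (rule has_derivative_mult[OF Hm_deriv[OF assms] gm_deriv])
  then show ?thesis by (simp add: F1_def DF1_def add.commute)
qed

lemma lie_F1: "lie (Xf h b E d m) (psi E d) = F1 m"
proof
  fix p
  have "lie (Xf h b E d m) (psi E d) p = Dpsi p (Hm m p *\<^sub>R BB m)"
    by (simp add: lie_def Xf_eq frechet_derivative_at[OF psi_deriv, symmetric])
  also have "\<dots> = F1 m p"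
    by (simp add: F1_def gm_def BB_def Dpsi_B)
  finally show "lie (Xf h b E d m) (psi E d) p = F1 m p" .
qed

lemma DF1_BB: "DF1 m p (BB m') = KK m' m p"
  by (simp add: DF1_def KK_def DHm_def PP_def algebra_simps)

lemma lie_F2: assumes "mn m \<in> {1,2}" shows "lie (Xf h b E d m') (F1 m) = F2 m' m"
proof
  fix p
  show "lie (Xf h b E d m') (F1 m) p = F2 m' m p"
    using frechet_derivative_at[OF F1_deriv[OF assms, of p], symmetric]
    by (simp add: lie_def Xf_eq DF1_BB F2_def)
qed

lemma PP_deriv: "((\<lambda>p. PP m' m p) has_derivative (\<lambda>w. DPP m' m p w)) (at p)"
proof -
  have "((\<lambda>p. DPs (mi m) p (BB m') * gm m p) has_derivative
     (\<lambda>w. DPs (mi m) p (BB m') * D2Ps (mi m) p w (BB m) + D2Ps (mi m) p w (BB m') * gm m p)) (at p)"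
    by (rule has_derivative_mult[OF DPs_deriv gm_deriv])
  then show ?thesis by (simp add: PP_def DPP_def add.commute)
qed

lemma PP_bound: "\<bar>PP m' m x\<bar> \<le> Ps (mi m) x * (SS (mi m) x (BB m') * SS (mi m) x (BB m))"
proof -
  have "\<bar>PP m' m x\<bar> = \<bar>DPs (mi m) x (BB m')\<bar> * \<bar>DPs (mi m) x (BB m)\<bar>"
    by (simp add: PP_def gm_def abs_mult)
  also have "\<dots> \<le> (sqrt (Ps (mi m) x) * SS (mi m) x (BB m')) * (sqrt (Ps (mi m) x) * SS (mi m) x (BB m))"
    by (intro mult_mono DPs_bound) (simp_all add: SS_nonneg Ps_nonneg)
  also have "\<dots> = Ps (mi m) x * (SS (mi m) x (BB m') * SS (mi m) x (BB m))"
    using Ps_nonneg[of "mi m" x] by (simp add: algebra_simps)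
  finally show ?thesis .
qed

lemma PP_zero: "Ps (mi m) p = 0 \<Longrightarrow> PP m' m p = 0"
  by (simp add: PP_def DPs_zero)
lemma DPP_zero: "Ps (mi m) p = 0 \<Longrightarrow> DPP m' m p w = 0"
  by (simp add: DPP_def gm_def DPs_zero)

lemma KK_deriv: assumes "mn m \<in> {1,2}"
  shows "((\<lambda>p. KK m' m p) has_derivative (\<lambda>w. DK m' m p w)) (at p)"
proof -
  have SSc: "isCont (\<lambda>x. SS (mi m) x (BB m') * SS (mi m) x (BB m)) p"
    by (intro isCont_mult SS_cont)
  have t1: "((\<lambda>x. deriv (h (mn m)) (Ps (mi m) x) * PP m' m x) has_derivative
     (\<lambda>v. deriv (deriv (h (mn m))) (Ps (mi m) p) * DPs (mi m) p v * PP m' m p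
          + deriv (h (mn m)) (Ps (mi m) p) * DPP m' m p v)) (at p)"
  proof (rule comp_dh_deriv[OF hprops(3,6)[OF assms] _ Ps_deriv _ _ PP_deriv])
    show "\<forall>x. 0 \<le> Ps (mi m) x" by (simp add: Ps_nonneg)
    show "Ps (mi m) p = 0 \<Longrightarrow> \<forall>v. DPs (mi m) p v = 0" by (simp add: DPs_zero)
    show "Ps (mi m) p = 0 \<Longrightarrow> \<exists>K. \<forall>\<^sub>F x in at p. Ps (mi m) x \<le> K * (norm (x - p))\<^sup>2"
      by (rule Ps_quad)
    show "Ps (mi m) p = 0 \<Longrightarrow> PP m' m p = 0 \<and> (\<forall>v. DPP m' m p v = 0)"
      by (simp add: PP_zero DPP_zero)
    show "Ps (mi m) p = 0 \<Longrightarrow> \<exists>K. \<forall>\<^sub>F x in at p. \<bar>PP m' m x\<bar> \<le> K * Ps (mi m) x"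
      using ev_bound_from_cont[OF SSc] PP_bound Ps_nonneg by blast
  qed
  have t2: "((\<lambda>x. Hm m x * D2Ps (mi m) x (BB m') (BB m)) has_derivative
     (\<lambda>v. Hm m p * D3Ps (mi m) p v (BB m') (BB m) + DHm m p v * D2Ps (mi m) p (BB m') (BB m))) (at p)"
    by (rule has_derivative_mult[OF Hm_deriv[OF assms] D2Ps_deriv])
  have "((\<lambda>x. deriv (h (mn m)) (Ps (mi m) x) * PP m' m x + Hm m x * D2Ps (mi m) x (BB m') (BB m))
     has_derivative (\<lambda>v. (deriv (deriv (h (mn m))) (Ps (mi m) p) * DPs (mi m) p v * PP m' m p
          + deriv (h (mn m)) (Ps (mi m) p) * DPP m' m p v) +
      (Hm m p * D3Ps (mi m) p v (BB m') (BB m) + DHm m p v * D2Ps (mi m) p (BB m') (BB m)))) (at p)"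
    by (rule has_derivative_add[OF t1 t2])
  then show ?thesis by (simp add: KK_def DK_def algebra_simps)
qed

lemma KK_cont: "mn m \<in> {1,2} \<Longrightarrow> isCont (\<lambda>p. KK m' m p) p"
  using KK_deriv has_derivative_continuous by blast

lemma F2_deriv: assumes "mn m \<in> {1,2}" "mn m' \<in> {1,2}"
  shows "((\<lambda>p. F2 m' m p) has_derivative (\<lambda>w. DF2 m' m p w)) (at p)"
proof -
  have "((\<lambda>p. Hm m' p * KK m' m p) has_derivative
      (\<lambda>w. Hm m' p * DK m' m p w + DHm m' p w * KK m' m p)) (at p)"
    by (rule has_derivative_mult[OF Hm_deriv[OF assms(2)] KK_deriv[OF assms(1)]])
  then show ?thesis by (simp add: F2_def DF2_def add.commute)
qed

lemma lie_F3: assumes "mn m \<in> {1,2}" "mn m' \<in> {1,2}"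
  shows "lie (Xf h b E d m'') (F2 m' m) = F3 m'' m' m"
proof
  fix p
  show "lie (Xf h b E d m'') (F2 m' m) p = F3 m'' m' m p"
    using frechet_derivative_at[OF F2_deriv[OF assms, of p], symmetric]
    by (simp add: lie_def Xf_eq F3_def)
qed

end


context Pfw begin

lemma m_simps[simp]: "mi (i,k,\<nu>) = i" "mk (i,k,\<nu>) = k" "mn (i,k,\<nu>) = \<nu>"
  by (simp_all add: mi_def mk_def mn_def)

lemma DK_alt: "DK m' m p w = deriv (deriv (h (mn m))) (Ps (mi m) p) * (DPs (mi m) p w * PP m' m p)
   + deriv (h (mn m)) (Ps (mi m) p) * DPP m' m p w
   + deriv (h (mn m)) (Ps (mi m) p) * (DPs (mi m) p w * D2Ps (mi m) p (BB m') (BB m))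
   + Hm m p * D3Ps (mi m) p w (BB m') (BB m)"
  by (simp add: DK_def DHm_def mult.assoc)

lemma gm_cont: "isCont (\<lambda>p. gm m p) p" unfolding gm_def by (rule DPs_cont)
lemma PP_cont: "isCont (\<lambda>p. PP m' m p) p"
  using PP_deriv has_derivative_continuous by blast
lemma DPP_cont: "isCont (\<lambda>p. DPP m' m p w) p"
  unfolding DPP_def by (intro isCont_add isCont_mult D2Ps_cont gm_cont DPs_cont)

lemma DK_cont: assumes "mn m \<in> {1,2}" shows "isCont (\<lambda>p. DK m' m p w) p"
proof -
  let ?i = "mi m"
  have nn: "\<forall>x. 0 \<le> Ps ?i x" by (simp add: Ps_nonneg)
  have c1: "isCont (\<lambda>x. deriv (deriv (h (mn m))) (Ps ?i x) * (DPs ?i x w * PP m' m x)) p"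
  proof (rule cont_ddh[where S="\<lambda>x. SS ?i x w * (SS ?i x (BB m') * SS ?i x (BB m))",
      OF hprops(4,7)[OF assms] nn Ps_cont])
    show "isCont (\<lambda>x. DPs ?i x w * PP m' m x) p" by (intro isCont_mult DPs_cont PP_cont)
    show "isCont (\<lambda>x. SS ?i x w * (SS ?i x (BB m') * SS ?i x (BB m))) p"
      by (intro isCont_mult SS_cont)
    show "\<forall>x. \<bar>DPs ?i x w * PP m' m x\<bar> \<le> Ps ?i x * sqrt (Ps ?i x) * (SS ?i x w * (SS ?i x (BB m') * SS ?i x (BB m)))"
    proof
      fix x
      have "\<bar>DPs ?i x w * PP m' m x\<bar> \<le> (sqrt (Ps ?i x) * SS ?i x w) * (Ps ?i x * (SS ?i x (BB m') * SS ?i x (BB m)))"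
        unfolding abs_mult by (intro mult_mono DPs_bound PP_bound) (simp_all add: SS_nonneg Ps_nonneg)
      then show "\<bar>DPs ?i x w * PP m' m x\<bar> \<le> Ps ?i x * sqrt (Ps ?i x) * (SS ?i x w * (SS ?i x (BB m') * SS ?i x (BB m)))"
        by (simp add: algebra_simps)
    qed
  qed
  have c2: "isCont (\<lambda>x. deriv (h (mn m)) (Ps ?i x) * DPP m' m x w) p"
    by (rule cont_dh[OF hprops(3,6)[OF assms] nn Ps_cont DPP_cont]) (simp add: DPP_zero)
  have c3: "isCont (\<lambda>x. deriv (h (mn m)) (Ps ?i x) * (DPs ?i x w * D2Ps ?i x (BB m') (BB m))) p"
    by (rule cont_dh[OF hprops(3,6)[OF assms] nn Ps_cont])
       (auto intro!: isCont_mult DPs_cont D2Ps_cont simp: DPs_zero)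
  have c4: "isCont (\<lambda>x. Hm m x * D3Ps ?i x w (BB m') (BB m)) p"
    by (intro isCont_mult Hm_cont[OF assms] D3Ps_cont)
  show ?thesis unfolding DK_alt by (intro isCont_add c1 c2 c3 c4)
qed

lemma F3_cont: assumes "mn m \<in> {1,2}" "mn m' \<in> {1,2}" "mn m'' \<in> {1,2}"
  shows "isCont (\<lambda>p. F3 m'' m' m p) p"
proof -
  have e: "\<And>p. F3 m'' m' m p = Hm m'' p * (deriv (h (mn m')) (Ps (mi m') p) * (DPs (mi m') p (BB m'') * KK m' m p)
      + Hm m' p * DK m' m p (BB m''))"
    by (simp add: F3_def DF2_def DHm_def mult.assoc)
  have c1: "isCont (\<lambda>p. deriv (h (mn m')) (Ps (mi m') p) * (DPs (mi m') p (BB m'') * KK m' m p)) p"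
    by (rule cont_dh[OF hprops(3,6)[OF assms(2)] _ Ps_cont])
       (auto intro!: isCont_mult DPs_cont KK_cont[OF assms(1)] simp: DPs_zero Ps_nonneg)
  show ?thesis unfolding e
    by (intro isCont_mult isCont_add c1 Hm_cont assms DK_cont)
qed

lemma Xf_deriv: assumes "mn m \<in> {1,2}"
  shows "(Xf h b E d m has_derivative (\<lambda>v. DHm m p v *\<^sub>R BB m)) (at p)"
proof -
  have "((\<lambda>p. Hm m p *\<^sub>R BB m) has_derivative (\<lambda>v. DHm m p v *\<^sub>R BB m)) (at p)"
    using has_derivative_scaleR[OF Hm_deriv[OF assms] has_derivative_const[of "BB m"]] by simp
  moreover have "Xf h b E d m = (\<lambda>p. Hm m p *\<^sub>R BB m)" by (simp add: fun_eq_iff Xf_eq)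
  ultimately show ?thesis by simp
qed

lemma lie_Y: "lie (Yf h b E d) (psi E d) p =
   (1/2) * (\<Sum>i\<in>UNIV. \<Sum>k\<in>UNIV. F2 (i,k,1) (i,k,2) p - F2 (i,k,2) (i,k,1) p)"
proof -
  have lin: "linear (Dpsi p)"
    using psi_deriv has_derivative_bounded_linear bounded_linear.linear by blast
  have br: "\<And>i k. lie_bracket (Xf h b E d (i,k,1)) (Xf h b E d (i,k,2)) p =
      (Hm (i,k,1) p * DHm (i,k,2) p (Bvec b i k) - Hm (i,k,2) p * DHm (i,k,1) p (Bvec b i k)) *\<^sub>R Bvec b i k"
  proof -
    fix i k
    have d1: "frechet_derivative (Xf h b E d (i,k,1)) (at p) = (\<lambda>v. DHm (i,k,1) p v *\<^sub>R BB (i,k,1))"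
      by (rule frechet_derivative_at[OF Xf_deriv, symmetric]) simp
    have d2: "frechet_derivative (Xf h b E d (i,k,2)) (at p) = (\<lambda>v. DHm (i,k,2) p v *\<^sub>R BB (i,k,2))"
      by (rule frechet_derivative_at[OF Xf_deriv, symmetric]) simp
    show "?thesis i k"
      unfolding lie_bracket_def d1 d2 by (simp add: Xf_eq BB_def algebra_simps)
  qed
  have "lie (Yf h b E d) (psi E d) p = Dpsi p (Yf h b E d p)"
    by (simp add: lie_def frechet_derivative_at[OF psi_deriv, symmetric])
  also have "\<dots> = (1/2) * (\<Sum>i\<in>UNIV. \<Sum>k\<in>UNIV.
      (Hm (i,k,1) p * DHm (i,k,2) p (Bvec b i k) - Hm (i,k,2) p * DHm (i,k,1) p (Bvec b i k)) * DPs i p (Bvec b i k))"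
    unfolding Yf_def br
    by (simp add: linear_scale[OF lin] linear_sum[OF lin] Dpsi_B)
  also have "\<dots> = (1/2) * (\<Sum>i\<in>UNIV. \<Sum>k\<in>UNIV. F2 (i,k,1) (i,k,2) p - F2 (i,k,2) (i,k,1) p)"
    by (simp add: F2_def KK_def PP_def gm_def DHm_def BB_def algebra_simps)
  finally show ?thesis .
qed

end


lemma exp_vd: "((\<lambda>s. exp (\<i> * complex_of_real (a * s))) has_vector_derivative
     (\<i> * complex_of_real a * exp (\<i> * complex_of_real (a * s)))) (at s)"
proof -
  have "((\<lambda>z. exp (\<i> * of_real a * z)) has_field_derivative
      (\<i> * of_real a * exp (\<i> * of_real a * of_real s))) (at (of_real s))"
    by (auto intro!: derivative_eq_intros)
  from has_vector_derivative_real_field[OF this] show ?thesis by (simp add: mult.assoc)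
qed

lemma Omega_eq: "Omega \<omega> (i,k,\<nu>) = {\<omega> i k, - \<omega> i k}" by (simp add: Omega_def)

lemma sum_pm: "(a::real) > 0 \<Longrightarrow> (\<Sum>w\<in>{a, -a}. f w) = f a + f (-a)"
  by simp

lemma exp_neg_i: "exp (\<i> * complex_of_real (- t)) = inverse (exp (\<i> * complex_of_real t))"
  by (simp add: exp_minus[symmetric])

lemma u_exp:
  assumes pos: "\<omega> i k > 0" and nu: "\<nu> \<in> {1,2}"
  shows "complex_of_real (u \<omega> \<phi> (i,k,\<nu>) s) =
    (\<Sum>w\<in>Omega \<omega> (i,k,\<nu>). eta \<omega> \<phi> w (i,k,\<nu>) * exp (\<i> * complex_of_real (w * s)))"
proof -
  define a where "a = \<omega> i k"
  define f where "f = \<phi> i k"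
  define E1 where "E1 = exp (\<i> * complex_of_real (a * s))"
  define E2 where "E2 = exp (\<i> * complex_of_real f)"
  have a: "a > 0" using pos by (simp add: a_def)
  have ea: "exp (\<i> * complex_of_real (a * s + f)) = E1 * E2"
    by (simp add: E1_def E2_def distrib_left exp_add)
  have eb: "exp (- (\<i> * complex_of_real (a * s + f))) = inverse E1 * inverse E2"
  proof -
    have "- (\<i> * complex_of_real (a * s + f)) = - (\<i> * complex_of_real (a * s)) + - (\<i> * complex_of_real f)"
      by (simp add: algebra_simps)
    then show ?thesis by (simp only: exp_add exp_minus E1_def E2_def)
  qed
  have c: "complex_of_real (cos (a * s + f)) = (E1 * E2 + inverse E1 * inverse E2) / 2"
    by (simp only: cos_of_real[symmetric] cos_exp_eq ea eb)
  have si: "complex_of_real (sin (a * s + f)) = (E1 * E2 - inverse E1 * inverse E2) / (2 * \<i>)"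
    by (simp only: sin_of_real[symmetric] sin_exp_eq ea eb)
  have m1: "exp (\<i> * complex_of_real (- a * s)) = inverse E1" unfolding E1_def
    using exp_neg_i[of "a * s"] by simp
  have m2: "exp (\<i> * complex_of_real (- f)) = inverse E2" unfolding E2_def
    using exp_neg_i[of f] by simp
  have sg: "sgn a = 1" "sgn (-a) = -1" using a by simp_all
  have ex1: "exp (\<i> * complex_of_real (a * s)) = E1" by (simp add: E1_def)
  have sq: "(\<Sum>w\<in>Omega \<omega> (i,k,\<nu>). eta \<omega> \<phi> w (i,k,\<nu>) * exp (\<i> * complex_of_real (w * s)))
     = eta \<omega> \<phi> a (i,k,\<nu>) * E1 + eta \<omega> \<phi> (-a) (i,k,\<nu>) * inverse E1"
    unfolding Omega_eq a_def[symmetric] sum_pm[OF a] ex1 m1 ..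
  consider "\<nu> = 1" | "\<nu> = 2" using nu by blast
  then show ?thesis
  proof cases
    case 1
    have e1: "eta \<omega> \<phi> a (i,k,\<nu>) = complex_of_real (sqrt a) * E2 / 2"
      using 1 by (simp add: eta_def a_def[symmetric] f_def[symmetric] E2_def sg)
    have e2: "eta \<omega> \<phi> (-a) (i,k,\<nu>) = complex_of_real (sqrt a) * inverse E2 / 2"
      using 1 by (simp add: eta_def a_def[symmetric] f_def[symmetric] E2_def sg exp_minus)
    have "complex_of_real (u \<omega> \<phi> (i,k,\<nu>) s) = complex_of_real (sqrt a) * complex_of_real (cos (a * s + f))"
      using 1 by (simp add: u_def a_def f_def)
    also have "\<dots> = complex_of_real (sqrt a) * ((E1 * E2 + inverse E1 * inverse E2) / 2)" by (simp only: c)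
    also have "\<dots> = eta \<omega> \<phi> a (i,k,\<nu>) * E1 + eta \<omega> \<phi> (-a) (i,k,\<nu>) * inverse E1"
      unfolding e1 e2 by (simp add: algebra_simps add_divide_distrib)
    finally show ?thesis using sq by simp
  next
    case 2
    have e1: "eta \<omega> \<phi> a (i,k,\<nu>) = complex_of_real (sqrt a) * E2 / (2 * \<i>)"
      using 2 by (simp add: eta_def a_def[symmetric] f_def[symmetric] E2_def sg)
    have e2: "eta \<omega> \<phi> (-a) (i,k,\<nu>) = - complex_of_real (sqrt a) * inverse E2 / (2 * \<i>)"
      using 2 by (simp add: eta_def a_def[symmetric] f_def[symmetric] E2_def sg exp_minus)
    have "complex_of_real (u \<omega> \<phi> (i,k,\<nu>) s) = complex_of_real (sqrt a) * complex_of_real (sin (a * s + f))"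
      using 2 by (simp add: u_def a_def f_def)
    also have "\<dots> = complex_of_real (sqrt a) * ((E1 * E2 - inverse E1 * inverse E2) / (2 * \<i>))" by (simp only: si)
    also have "\<dots> = eta \<omega> \<phi> a (i,k,\<nu>) * E1 + eta \<omega> \<phi> (-a) (i,k,\<nu>) * inverse E1"
      unfolding e1 e2 by (simp add: algebra_simps diff_divide_distrib)
    finally show ?thesis using sq by simp
  qed
qed


lemma res_val:
  assumes pos: "\<omega> i k > 0" and nu: "\<nu> \<in> {1,2}" "\<nu>' \<in> {1,2}"
  shows "eta \<omega> \<phi> (-(\<omega> i k)) (i,k,\<nu>) / (\<i> * complex_of_real (-(\<omega> i k))) * eta \<omega> \<phi> (\<omega> i k) (i,k,\<nu>')
     + eta \<omega> \<phi> (\<omega> i k) (i,k,\<nu>) / (\<i> * complex_of_real (\<omega> i k)) * eta \<omega> \<phi> (-(\<omega> i k)) (i,k,\<nu>')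
     = (if \<nu> = 1 \<and> \<nu>' = 2 then 1/2 else if \<nu> = 2 \<and> \<nu>' = 1 then -1/2 else 0)"
proof -
  define a where "a = \<omega> i k"
  define E where "E = exp (\<i> * complex_of_real (\<phi> i k))"
  define q where "q = complex_of_real (sqrt a)"
  have a: "a > 0" using pos by (simp add: a_def)
  have qq: "q * q = complex_of_real a" using a by (simp add: q_def flip: of_real_mult)
  have E0: "E \<noteq> 0" by (simp add: E_def)
  have a0: "complex_of_real a \<noteq> 0" using a by simp
  have sg: "sgn a = 1" "sgn (-a) = -1" using a by simp_all
  define Ap where "Ap n = (if n = (1::nat) then E / 2 else E / (2 * \<i>))" for n
  define Am where "Am n = (if n = (1::nat) then inverse E / 2 else - inverse E / (2 * \<i>))" for n
  have ep: "eta \<omega> \<phi> a (i,k,n) = q * Ap n" for n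
    by (simp add: eta_def a_def[symmetric] sg q_def E_def Ap_def)
  have em: "eta \<omega> \<phi> (-a) (i,k,n) = q * Am n" for n
    by (simp add: eta_def a_def[symmetric] sg q_def E_def exp_minus Am_def)
  have st: "(q * x) / (\<i> * c) * (q * y) = (q * q) * (x * y) / (\<i> * c)" for x y c
    by (simp add: mult_ac)
  have st2: "complex_of_real a * z / (\<i> * complex_of_real a) = z / \<i>" for z
    using a0 by simp
  have st3: "complex_of_real a * z / (\<i> * complex_of_real (- a)) = - z / \<i>" for z
    using a0 by simp
  have "eta \<omega> \<phi> (-a) (i,k,\<nu>) / (\<i> * complex_of_real (-a)) * eta \<omega> \<phi> a (i,k,\<nu>')
     + eta \<omega> \<phi> a (i,k,\<nu>) / (\<i> * complex_of_real a) * eta \<omega> \<phi> (-a) (i,k,\<nu>')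
     = (Ap \<nu> * Am \<nu>' - Am \<nu> * Ap \<nu>') / \<i>"
    unfolding ep em st qq st2 st3 by (simp add: diff_divide_distrib algebra_simps)
  also have "\<dots> = (if \<nu> = 1 \<and> \<nu>' = 2 then 1/2 else if \<nu> = 2 \<and> \<nu>' = 1 then -1/2 else 0)"
  proof -
    consider "\<nu> = 1" "\<nu>' = 1" | "\<nu> = 1" "\<nu>' = 2" | "\<nu> = 2" "\<nu>' = 1" | "\<nu> = 2" "\<nu>' = 2"
      using nu by blast
    then show ?thesis
    proof cases
      case 1 then show ?thesis by (simp add: Ap_def Am_def)
    next
      case 2 then show ?thesis using E0 by (simp add: Ap_def Am_def field_simps)
    next
      case 3 then show ?thesis using E0 by (simp add: Ap_def Am_def field_simps)
    next
      case 4 then show ?thesis by (simp add: Ap_def Am_def)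
    qed
  qed
  finally show ?thesis by (simp add: a_def)
qed


lemma UV1_deriv:
  assumes pos: "\<omega> i k > 0" and nu: "\<nu> \<in> {1,2}"
  shows "((\<lambda>s. UV1 \<omega> \<phi> (i,k,\<nu>) s) has_vector_derivative - complex_of_real (u \<omega> \<phi> (i,k,\<nu>) s)) (at s)"
proof -
  let ?Om1 = "Omega \<omega> (i,k,\<nu>)"
  have nz: "w \<in> ?Om1 \<Longrightarrow> w \<noteq> 0" for w using pos by (auto simp: Omega_eq)
  have d: "((\<lambda>s. - (\<Sum>w\<in>?Om1. eta \<omega> \<phi> w (i,k,\<nu>) / (\<i> * complex_of_real w) * exp (\<i> * complex_of_real (w * s))))
      has_vector_derivative
      - (\<Sum>w\<in>?Om1. eta \<omega> \<phi> w (i,k,\<nu>) / (\<i> * complex_of_real w) * (\<i> * complex_of_real w * exp (\<i> * complex_of_real (w * s))))) (at s)"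
    by (intro has_vector_derivative_minus has_vector_derivative_sum has_vector_derivative_mult_right exp_vd)
  have "(\<Sum>w\<in>?Om1. eta \<omega> \<phi> w (i,k,\<nu>) / (\<i> * complex_of_real w) * (\<i> * complex_of_real w * exp (\<i> * complex_of_real (w * s))))
      = (\<Sum>w\<in>?Om1. eta \<omega> \<phi> w (i,k,\<nu>) * exp (\<i> * complex_of_real (w * s)))"
  proof (rule sum.cong)
    fix w assume "w \<in> ?Om1"
    then have "complex_of_real w \<noteq> 0" using nz by simp
    then show "eta \<omega> \<phi> w (i,k,\<nu>) / (\<i> * complex_of_real w) * (\<i> * complex_of_real w * exp (\<i> * complex_of_real (w * s)))
      = eta \<omega> \<phi> w (i,k,\<nu>) * exp (\<i> * complex_of_real (w * s))" by (simp add: field_simps)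
  qed simp
  then show ?thesis using d u_exp[of \<omega> i k \<nu> \<phi> s, OF pos nu] by (simp add: UV1_def)
qed

definition SS2 :: "('N \<Rightarrow> 'n \<Rightarrow> real) \<Rightarrow> ('N \<times> 'n \<times> nat) \<Rightarrow> ('N \<times> 'n \<times> nat) \<Rightarrow> (real \<times> real) set" where
  "SS2 \<omega> m' m = {(w',w). w' \<in> Omega \<omega> m' \<and> w \<in> Omega \<omega> m \<and> w' + w \<noteq> 0}"

definition C2 where
  "C2 \<omega> \<phi> m' m x = eta \<omega> \<phi> (fst x) m' * eta \<omega> \<phi> (snd x) m /
      (\<i>\<^sup>2 * complex_of_real (snd x) * complex_of_real (fst x + snd x))"

definition DUV2 where
  "DUV2 \<omega> \<phi> m' m s = (\<Sum>x\<in>SS2 \<omega> m' m. C2 \<omega> \<phi> m' m x *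
      (\<i> * complex_of_real (fst x + snd x) * exp (\<i> * complex_of_real ((fst x + snd x) * s))))"

lemma UV2_alt: "UV2 \<omega> \<phi> m' m t =
   (\<Sum>x\<in>SS2 \<omega> m' m. C2 \<omega> \<phi> m' m x * exp (\<i> * complex_of_real ((fst x + snd x) * t)))"
  unfolding UV2_def SS2_def C2_def case_prod_unfold ..

lemma UV2_deriv: "((\<lambda>s. UV2 \<omega> \<phi> m' m s) has_vector_derivative DUV2 \<omega> \<phi> m' m s) (at s)"
  unfolding UV2_alt DUV2_def
  by (intro has_vector_derivative_sum has_vector_derivative_mult_right exp_vd)

lemma C2_step:
  fixes A B w y Ex :: complex
  assumes "y \<noteq> 0" "w \<noteq> 0"
  shows "A * B / (\<i>\<^sup>2 * w * y) * (\<i> * y * Ex) = B / (\<i> * w) * A * Ex"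
  using assms by (simp add: field_simps power2_eq_square)

lemma coef_id:
  assumes pos: "\<forall>i k. \<omega> i k > 0" and inj: "inj (\<lambda>(i,k). \<omega> i k)"
    and nu: "\<nu> \<in> {1,2}" "\<nu>' \<in> {1,2}"
  shows "UV1 \<omega> \<phi> (i,k,\<nu>) s * complex_of_real (u \<omega> \<phi> (i',k',\<nu>') s) + DUV2 \<omega> \<phi> (i',k',\<nu>') (i,k,\<nu>) s
    = - (if i = i' \<and> k = k' then (if \<nu> = 1 \<and> \<nu>' = 2 then 1/2 else if \<nu> = 2 \<and> \<nu>' = 1 then -1/2 else 0) else 0)"
proof -
  define m where "m = (i,k,\<nu>)"
  define m' where "m' = (i',k',\<nu>')"
  define Om1 where "Om1 = Omega \<omega> m"
  define Om2 where "Om2 = Omega \<omega> m'"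
  define aw where "aw w = eta \<omega> \<phi> w m / (\<i> * complex_of_real w)" for w
  define e where "e w = exp (\<i> * complex_of_real (w * s))" for w
  define g where "g x = aw (snd x) * eta \<omega> \<phi> (fst x) m' * e (fst x + snd x)" for x
  have fO: "finite Om1" "finite Om2" by (simp_all add: Om1_def Om2_def Omega_eq m_def m'_def)
  have ee: "e w * e w' = e (w' + w)" for w w'
    by (simp add: e_def distrib_right distrib_left exp_add[symmetric] add.commute)
  have p1: "UV1 \<omega> \<phi> m s * complex_of_real (u \<omega> \<phi> m' s) = - (\<Sum>x\<in>Om2 \<times> Om1. g x)"
  proof -
    have "UV1 \<omega> \<phi> m s = - (\<Sum>w\<in>Om1. aw w * e w)" by (simp add: UV1_def Om1_def aw_def e_def)
    moreover have "complex_of_real (u \<omega> \<phi> m' s) = (\<Sum>w'\<in>Om2. eta \<omega> \<phi> w' m' * e w')"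
      unfolding Om2_def e_def m'_def by (rule u_exp) (use pos nu in auto)
    ultimately have "UV1 \<omega> \<phi> m s * complex_of_real (u \<omega> \<phi> m' s)
        = - (\<Sum>w\<in>Om1. \<Sum>w'\<in>Om2. aw w * e w * (eta \<omega> \<phi> w' m' * e w'))"
      by (simp add: sum_product)
    also have "\<dots> = - (\<Sum>w'\<in>Om2. \<Sum>w\<in>Om1. aw w * e w * (eta \<omega> \<phi> w' m' * e w'))"
      by (subst sum.swap) simp
    also have "\<dots> = - (\<Sum>x\<in>Om2 \<times> Om1. g x)"
      by (simp add: sum.cartesian_product g_def case_prod_unfold ee[symmetric] mult_ac)
    finally show ?thesis .
  qed
  have SSe: "SS2 \<omega> m' m = {x\<in>Om2 \<times> Om1. fst x + snd x \<noteq> 0}"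
    by (auto simp: SS2_def Om1_def Om2_def)
  have p2: "DUV2 \<omega> \<phi> m' m s = (\<Sum>x\<in>{x\<in>Om2 \<times> Om1. fst x + snd x \<noteq> 0}. g x)"
    unfolding DUV2_def SSe
  proof (rule sum.cong)
    fix x assume x: "x \<in> {x \<in> Om2 \<times> Om1. fst x + snd x \<noteq> 0}"
    then have "fst x + snd x \<noteq> 0" by simp
    then have n1: "complex_of_real (fst x + snd x) \<noteq> 0" by (simp del: of_real_add)
    have "snd x \<noteq> 0" using x pos[rule_format, of i k] by (auto simp: Om1_def m_def Omega_eq)
    then have n2: "complex_of_real (snd x) \<noteq> 0" by simp
    show "C2 \<omega> \<phi> m' m x * (\<i> * complex_of_real (fst x + snd x) * exp (\<i> * complex_of_real ((fst x + snd x) * s))) = g x"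
      unfolding C2_def g_def aw_def e_def by (rule C2_step[OF n1 n2])
  qed simp
  have p3: "(\<Sum>x\<in>Om2 \<times> Om1. g x) = (\<Sum>x\<in>{x\<in>Om2 \<times> Om1. fst x + snd x \<noteq> 0}. g x)
      + (\<Sum>x\<in>{x\<in>Om2 \<times> Om1. fst x + snd x = 0}. g x)"
  proof -
    have "(\<Sum>x\<in>Om2 \<times> Om1. g x) = (\<Sum>x\<in>Om2 \<times> Om1. (if fst x + snd x \<noteq> 0 then g x else 0) + (if fst x + snd x = 0 then g x else 0))"
      by (rule sum.cong) auto
    also have "\<dots> = (\<Sum>x\<in>Om2 \<times> Om1. if fst x + snd x \<noteq> 0 then g x else 0) + (\<Sum>x\<in>Om2 \<times> Om1. if fst x + snd x = 0 then g x else 0)"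
      by (rule sum.distrib)
    finally show ?thesis using fO by (simp add: sum.inter_filter)
  qed
  have tot: "UV1 \<omega> \<phi> m s * complex_of_real (u \<omega> \<phi> m' s) + DUV2 \<omega> \<phi> m' m s
      = - (\<Sum>x\<in>{x\<in>Om2 \<times> Om1. fst x + snd x = 0}. g x)"
    using p1 p2 p3 by simp
  show ?thesis
  proof (cases "i = i' \<and> k = k'")
    case False
    have "{x\<in>Om2 \<times> Om1. fst x + snd x = 0} = {}"
    proof (rule ccontr)
      assume "{x\<in>Om2 \<times> Om1. fst x + snd x = 0} \<noteq> {}"
      then obtain w' w where w: "w' \<in> Om2" "w \<in> Om1" "w' + w = 0" by auto
      have p: "\<omega> i k > 0" "\<omega> i' k' > 0" using pos by auto
      from w have "\<omega> i' k' = \<omega> i k" using p by (auto simp: Om1_def Om2_def m_def m'_def Omega_eq)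
      then have "(i',k') = (i,k)" using inj by (auto simp: inj_def)
      then show False using False by simp
    qed
    then have z: "(\<Sum>x\<in>{x\<in>Om2 \<times> Om1. fst x + snd x = 0}. g x) = 0" by (simp only: sum.empty)
    show ?thesis using tot z False unfolding m_def m'_def by simp
  next
    case True
    define a where "a = \<omega> i k"
    have a: "a > 0" using pos by (simp add: a_def)
    have OO: "Om1 = {a, -a}" "Om2 = {a, -a}" using True by (simp_all add: Om1_def Om2_def m_def m'_def Omega_eq a_def)
    have R: "{x\<in>Om2 \<times> Om1. fst x + snd x = 0} = {(a, -a), (-a, a)}"
      using a unfolding OO by auto
    have e0: "e 0 = 1" by (simp add: e_def)
    have "(\<Sum>x\<in>{x\<in>Om2 \<times> Om1. fst x + snd x = 0}. g x) = g (a, -a) + g (-a, a)"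
      unfolding R using a by simp
    also have "\<dots> = eta \<omega> \<phi> (-(\<omega> i k)) (i,k,\<nu>) / (\<i> * complex_of_real (-(\<omega> i k))) * eta \<omega> \<phi> (\<omega> i k) (i,k,\<nu>')
     + eta \<omega> \<phi> (\<omega> i k) (i,k,\<nu>) / (\<i> * complex_of_real (\<omega> i k)) * eta \<omega> \<phi> (-(\<omega> i k)) (i,k,\<nu>')"
      using True by (simp add: g_def aw_def e0 m_def m'_def a_def)
    also have "\<dots> = (if \<nu> = 1 \<and> \<nu>' = 2 then 1/2 else if \<nu> = 2 \<and> \<nu>' = 1 then -1/2 else 0)"
      by (rule res_val) (use pos nu in auto)
    finally show ?thesis using tot True by (simp add: m_def m'_def)
  qed
qed


lemma chain_lie:
  fixes F :: "'a::real_normed_vector \<Rightarrow> real"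
  assumes FD: "\<And>p. (F has_derivative DF p) (at p)"
    and gd: "(\<gamma> has_vector_derivative (\<Sum>m\<in>L. c m *\<^sub>R X m (\<gamma> s))) (at s)"
  shows "((\<lambda>s. F (\<gamma> s)) has_real_derivative (\<Sum>m\<in>L. c m * lie (X m) F (\<gamma> s))) (at s)"
proof -
  let ?V = "\<Sum>m\<in>L. c m *\<^sub>R X m (\<gamma> s)"
  have bl: "bounded_linear (DF (\<gamma> s))" using FD has_derivative_bounded_linear by blast
  then have lin: "linear (DF (\<gamma> s))" by (rule bounded_linear.linear)
  have "((\<lambda>x. F (\<gamma> x)) has_derivative (\<lambda>x. DF (\<gamma> s) (x *\<^sub>R ?V))) (at s)"
    using has_derivative_compose[OF gd[unfolded has_vector_derivative_def] FD] .
  moreover have "(\<lambda>x. DF (\<gamma> s) (x *\<^sub>R ?V)) = (*) (DF (\<gamma> s) ?V)"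
    by (rule ext) (simp add: linear_scale[OF lin])
  moreover have "DF (\<gamma> s) ?V = (\<Sum>m\<in>L. c m * lie (X m) F (\<gamma> s))"
    by (simp add: linear_sum[OF lin] linear_scale[OF lin] lie_def frechet_derivative_at[OF FD, symmetric])
  ultimately show ?thesis by (simp add: has_field_derivative_def)
qed

lemma chain_lie_c:
  fixes F :: "'a::real_normed_vector \<Rightarrow> real"
  assumes FD: "\<And>p. (F has_derivative DF p) (at p)"
    and gd: "(\<gamma> has_vector_derivative (\<Sum>m\<in>L. c m *\<^sub>R X m (\<gamma> s))) (at s)"
  shows "((\<lambda>s. complex_of_real (F (\<gamma> s))) has_vector_derivative
           complex_of_real (\<Sum>m\<in>L. c m * lie (X m) F (\<gamma> s))) (at s)"
  by (rule has_vector_derivative_of_real, rule chain_lie[where DF=DF], rule FD, rule gd)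

lemma sum_prod_split: "sum f (A \<times> B) = (\<Sum>x\<in>A. \<Sum>y\<in>B. f (x,y))"
proof -
  have "sum (\<lambda>(x,y). f (x,y)) (A \<times> B) = (\<Sum>x\<in>A. \<Sum>y\<in>B. f (x,y))"
    by (rule sum.cartesian_product[symmetric])
  then show ?thesis by (simp only: case_prod_eta)
qed

lemma sum_Lambda: "(\<Sum>m\<in>Lambda. f m) = (\<Sum>i\<in>UNIV. \<Sum>k\<in>UNIV. f (i,k,1) + f (i,k,2))"
  unfolding Lambda_def sum_prod_split by simp

lemma Lambda_cases: "m \<in> Lambda \<Longrightarrow> (\<And>i k \<nu>. m = (i,k,\<nu>) \<Longrightarrow> \<nu> \<in> {1,2} \<Longrightarrow> P) \<Longrightarrow> P"
  by (cases m) (auto simp: Lambda_def)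

lemma UV1_deriv_L:
  assumes "\<forall>i k. \<omega> i k > 0" "m \<in> Lambda"
  shows "((\<lambda>s. UV1 \<omega> \<phi> m s) has_vector_derivative - complex_of_real (u \<omega> \<phi> m s)) (at s)"
proof (rule Lambda_cases[OF assms(2)])
  fix i k \<nu> assume m: "m = (i,k,\<nu>)" "\<nu> \<in> {1,2}"
  have "\<omega> i k > 0" using assms(1) by simp
  from UV1_deriv[of \<omega> i k \<nu> \<phi> s, OF this m(2)] show ?thesis by (simp add: m(1))
qed

lemma u_cont: "isCont (\<lambda>s. complex_of_real (u \<omega> \<phi> m s)) s0"
proof (cases m)
  case (fields i k \<nu>)
  have c1: "isCont (\<lambda>s. cos (\<omega> i k * s + \<phi> i k)) s0"
    by (intro isCont_cos' isCont_add isCont_mult continuous_ident continuous_const)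
  have c2: "isCont (\<lambda>s. sin (\<omega> i k * s + \<phi> i k)) s0"
    by (intro isCont_sin' isCont_add isCont_mult continuous_ident continuous_const)
  show ?thesis
  proof (cases "\<nu> = 1")
    case True
    then show ?thesis unfolding fields u_def using c1
      by (simp add: continuous_of_real isCont_mult continuous_const)
  next
    case False
    then show ?thesis unfolding fields u_def using c2
      by (simp add: continuous_of_real isCont_mult continuous_const)
  qed
qed

lemma UV2_cont: "isCont (\<lambda>s. UV2 \<omega> \<phi> m' m s) s0"
  using UV2_deriv has_vector_derivative_continuous by blast


context Pfw begin

definition cval :: "'N \<times> 'n \<times> nat \<Rightarrow> 'N \<times> 'n \<times> nat \<Rightarrow> complex" where
  "cval m1 m2 = - (if mi m1 = mi m2 \<and> mk m1 = mk m2 then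
      (if mn m1 = 1 \<and> mn m2 = 2 then 1/2 else if mn m1 = 2 \<and> mn m2 = 1 then -1/2 else 0) else 0)"

lemma coef_L:
  assumes pos: "\<forall>i k. \<omega> i k > 0" and inj: "inj (\<lambda>(i,k). \<omega> i k)"
    and m: "m1 \<in> Lambda" "m2 \<in> Lambda"
  shows "UV1 \<omega> \<phi> m1 s * complex_of_real (u \<omega> \<phi> m2 s) + DUV2 \<omega> \<phi> m2 m1 s = cval m1 m2"
proof (rule Lambda_cases[OF m(1)])
  fix i k \<nu> assume m1: "m1 = (i,k,\<nu>)" "\<nu> \<in> {1,2}"
  show ?thesis
  proof (rule Lambda_cases[OF m(2)])
    fix i' k' \<nu>' assume m2: "m2 = (i',k',\<nu>')" "\<nu>' \<in> {1,2}"
    show ?thesis using coef_id[OF pos inj m1(2) m2(2), of \<phi> i k s i' k']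
      by (simp add: m1(1) m2(1) cval_def)
  qed
qed

lemma sum_delta2:
  fixes i :: "'N" and k :: "'n"
  shows "(\<Sum>i'\<in>UNIV. \<Sum>k'\<in>UNIV. if i = i' \<and> k = k' then g i' k' else 0) = (g i k :: complex)"
proof -
  have "\<And>i'. (\<Sum>k'\<in>UNIV. if i = i' \<and> k = k' then g i' k' else 0) = (if i = i' then g i' k else 0)"
    by (case_tac "i = i'") (simp_all add: sum.delta sum.delta')
  then show ?thesis by (simp add: sum.delta sum.delta')
qed

lemma Y_sum:
  "(\<Sum>m1\<in>Lambda. \<Sum>m2\<in>Lambda. cval m1 m2 * complex_of_real (F2 m2 m1 p))
   = complex_of_real ((1/2) * (\<Sum>i\<in>UNIV. \<Sum>k\<in>UNIV. F2 (i,k,1) (i,k,2) p - F2 (i,k,2) (i,k,1) p))"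
proof -
  have in1: "(\<Sum>m2\<in>Lambda. cval (i,k,1) m2 * complex_of_real (F2 m2 (i,k,1) p))
      = - (1/2) * complex_of_real (F2 (i,k,2) (i,k,1) p)" for i k
  proof -
    have "(\<Sum>m2\<in>Lambda. cval (i,k,1) m2 * complex_of_real (F2 m2 (i,k,1) p))
      = (\<Sum>i'\<in>UNIV. \<Sum>k'\<in>UNIV. if i = i' \<and> k = k' then - (1/2) * complex_of_real (F2 (i',k',2) (i,k,1) p) else 0)"
      unfolding sum_Lambda by (intro sum.cong refl) (simp add: cval_def)
    also have "\<dots> = - (1/2) * complex_of_real (F2 (i,k,2) (i,k,1) p)"
      by (rule sum_delta2)
    finally show ?thesis .
  qed
  have in2: "(\<Sum>m2\<in>Lambda. cval (i,k,2) m2 * complex_of_real (F2 m2 (i,k,2) p))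
      = (1/2) * complex_of_real (F2 (i,k,1) (i,k,2) p)" for i k
  proof -
    have "(\<Sum>m2\<in>Lambda. cval (i,k,2) m2 * complex_of_real (F2 m2 (i,k,2) p))
      = (\<Sum>i'\<in>UNIV. \<Sum>k'\<in>UNIV. if i = i' \<and> k = k' then (1/2) * complex_of_real (F2 (i',k',1) (i,k,2) p) else 0)"
      unfolding sum_Lambda by (intro sum.cong refl) (simp add: cval_def)
    also have "\<dots> = (1/2) * complex_of_real (F2 (i,k,1) (i,k,2) p)"
      by (rule sum_delta2)
    finally show ?thesis .
  qed
  show ?thesis
    unfolding sum_Lambda[of "\<lambda>m1. \<Sum>m2\<in>Lambda. cval m1 m2 * complex_of_real (F2 m2 m1 p)"] in1 in2
    by (simp add: sum_distrib_left algebra_simps sum_subtractf of_real_sum[symmetric])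
qed

end


context Pfw begin

lemma lie_F2L: "m \<in> Lambda \<Longrightarrow> lie (Xf h b E d m') (F1 m) = F2 m' m"
  using lie_F2 Lambda_mn by blast
lemma lie_F3L: "m \<in> Lambda \<Longrightarrow> m' \<in> Lambda \<Longrightarrow> lie (Xf h b E d m'') (F2 m' m) = F3 m'' m' m"
  using lie_F3 Lambda_mn by blast

lemma D1e: "D1psi h b E d \<omega> \<phi> s p =
   - (\<Sum>m1\<in>Lambda. UV1 \<omega> \<phi> m1 s * complex_of_real (F1 m1 p))
   - (\<Sum>m1\<in>Lambda. \<Sum>m2\<in>Lambda. UV2 \<omega> \<phi> m2 m1 s * complex_of_real (F2 m2 m1 p))"
  unfolding D1psi_def lie_F1
  by (intro arg_cong2[where f="(-)"] arg_cong[where f=uminus] sum.cong refl)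
     (simp add: lie_F2L)

lemma D2e: "D2psi h b E d \<omega> \<phi> s p =
   (\<Sum>m1\<in>Lambda. \<Sum>m2\<in>Lambda. \<Sum>m3\<in>Lambda.
      complex_of_real (u \<omega> \<phi> m3 s) * UV2 \<omega> \<phi> m2 m1 s * complex_of_real (F3 m3 m2 m1 p))"
  unfolding D2psi_def lie_F1
  by (intro sum.cong refl) (simp add: lie_F2L lie_F3L)

lemma F2_cont: "m \<in> Lambda \<Longrightarrow> m' \<in> Lambda \<Longrightarrow> isCont (\<lambda>p. F2 m' m p) p"
  using F2_deriv Lambda_mn has_derivative_continuous by blast

end


context Pfw begin

lemma main_deriv:
  fixes \<omega> \<phi> :: "'N \<Rightarrow> 'n \<Rightarrow> real" and \<gamma> :: "real \<Rightarrow> (real^'n)^'N"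
  assumes \<omega>_pos: "\<forall>i k. \<omega> i k > 0" and \<omega>_distinct: "inj (\<lambda>(i,k). \<omega> i k)"
    and \<gamma>s: "(\<gamma> has_vector_derivative (\<Sum>m\<in>Lambda. u \<omega> \<phi> m s *\<^sub>R Xf h b E d m (\<gamma> s))) (at s)"
  shows "((\<lambda>s. complex_of_real (psi E d (\<gamma> s)) - D1psi h b E d \<omega> \<phi> s (\<gamma> s)) has_vector_derivative
     (complex_of_real (lie (Yf h b E d) (psi E d) (\<gamma> s)) + D2psi h b E d \<omega> \<phi> s (\<gamma> s))) (at s)"
proof -
  let ?cu = "\<lambda>m. complex_of_real (u \<omega> \<phi> m s)"
  have dpsi: "((\<lambda>s. complex_of_real (psi E d (\<gamma> s))) has_vector_derivative
      complex_of_real (\<Sum>m\<in>Lambda. u \<omega> \<phi> m s * F1 m (\<gamma> s))) (at s)"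
    using chain_lie_c[where F="psi E d" and DF=Dpsi and \<gamma>=\<gamma> and L=Lambda and c="\<lambda>m. u \<omega> \<phi> m s" and X="Xf h b E d" and s=s, OF psi_deriv \<gamma>s] by (simp add: lie_F1)
  have dF1: "((\<lambda>s. complex_of_real (F1 m1 (\<gamma> s))) has_vector_derivative
      complex_of_real (\<Sum>m\<in>Lambda. u \<omega> \<phi> m s * F2 m m1 (\<gamma> s))) (at s)" if "m1 \<in> Lambda" for m1
  proof -
    have "\<And>p. (F1 m1 has_derivative DF1 m1 p) (at p)"
      using F1_deriv[OF Lambda_mn[OF that]] by simp
    from chain_lie_c[where F="F1 m1" and DF="DF1 m1" and \<gamma>=\<gamma> and L=Lambda and c="\<lambda>m. u \<omega> \<phi> m s" and X="Xf h b E d" and s=s, OF this \<gamma>s] show ?thesis by (simp add: lie_F2L[OF that])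
  qed
  have dF2: "((\<lambda>s. complex_of_real (F2 m2 m1 (\<gamma> s))) has_vector_derivative
      complex_of_real (\<Sum>m\<in>Lambda. u \<omega> \<phi> m s * F3 m m2 m1 (\<gamma> s))) (at s)"
    if "m1 \<in> Lambda" "m2 \<in> Lambda" for m1 m2
  proof -
    have "\<And>p. (F2 m2 m1 has_derivative DF2 m2 m1 p) (at p)"
      using F2_deriv[OF Lambda_mn[OF that(1)] Lambda_mn[OF that(2)]] by simp
    from chain_lie_c[where F="F2 m2 m1" and DF="DF2 m2 m1" and \<gamma>=\<gamma> and L=Lambda and c="\<lambda>m. u \<omega> \<phi> m s" and X="Xf h b E d" and s=s, OF this \<gamma>s] show ?thesis by (simp add: lie_F3L[OF that])
  qed
  define Gd where "Gd = complex_of_real (\<Sum>m\<in>Lambda. u \<omega> \<phi> m s * F1 m (\<gamma> s))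
     + (\<Sum>m1\<in>Lambda. UV1 \<omega> \<phi> m1 s * complex_of_real (\<Sum>m\<in>Lambda. u \<omega> \<phi> m s * F2 m m1 (\<gamma> s))
          + - ?cu m1 * complex_of_real (F1 m1 (\<gamma> s)))
     + (\<Sum>m1\<in>Lambda. \<Sum>m2\<in>Lambda. UV2 \<omega> \<phi> m2 m1 s * complex_of_real (\<Sum>m\<in>Lambda. u \<omega> \<phi> m s * F3 m m2 m1 (\<gamma> s))
          + DUV2 \<omega> \<phi> m2 m1 s * complex_of_real (F2 m2 m1 (\<gamma> s)))"
  have dG: "((\<lambda>s. complex_of_real (psi E d (\<gamma> s))
     + (\<Sum>m1\<in>Lambda. UV1 \<omega> \<phi> m1 s * complex_of_real (F1 m1 (\<gamma> s)))
     + (\<Sum>m1\<in>Lambda. \<Sum>m2\<in>Lambda. UV2 \<omega> \<phi> m2 m1 s * complex_of_real (F2 m2 m1 (\<gamma> s))))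
     has_vector_derivative Gd) (at s)"
    unfolding Gd_def
  proof (intro has_vector_derivative_add dpsi has_vector_derivative_sum)
    fix m1 :: "'N \<times> 'n \<times> nat" assume m1: "m1 \<in> Lambda"
    show "((\<lambda>s. UV1 \<omega> \<phi> m1 s * complex_of_real (F1 m1 (\<gamma> s))) has_vector_derivative
       UV1 \<omega> \<phi> m1 s * complex_of_real (\<Sum>m\<in>Lambda. u \<omega> \<phi> m s * F2 m m1 (\<gamma> s))
          + - ?cu m1 * complex_of_real (F1 m1 (\<gamma> s))) (at s)"
      by (rule has_vector_derivative_mult[OF UV1_deriv_L[OF \<omega>_pos m1] dF1[OF m1]])
    fix m2 :: "'N \<times> 'n \<times> nat" assume m2: "m2 \<in> Lambda"
    show "((\<lambda>s. UV2 \<omega> \<phi> m2 m1 s * complex_of_real (F2 m2 m1 (\<gamma> s))) has_vector_derivative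
       UV2 \<omega> \<phi> m2 m1 s * complex_of_real (\<Sum>m\<in>Lambda. u \<omega> \<phi> m s * F3 m m2 m1 (\<gamma> s))
          + DUV2 \<omega> \<phi> m2 m1 s * complex_of_real (F2 m2 m1 (\<gamma> s))) (at s)"
      by (rule has_vector_derivative_mult[OF UV2_deriv dF2[OF m1 m2]])
  qed
  have Gd_eq: "Gd = complex_of_real (lie (Yf h b E d) (psi E d) (\<gamma> s)) + D2psi h b E d \<omega> \<phi> s (\<gamma> s)"
  proof -
    let ?p = "\<gamma> s"
    have a: "complex_of_real (\<Sum>m\<in>Lambda. u \<omega> \<phi> m s * F1 m ?p) = (\<Sum>m\<in>Lambda. ?cu m * complex_of_real (F1 m ?p))"
      by simp
    have b: "(\<Sum>m1\<in>Lambda. UV1 \<omega> \<phi> m1 s * complex_of_real (\<Sum>m\<in>Lambda. u \<omega> \<phi> m s * F2 m m1 ?p)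
          + - ?cu m1 * complex_of_real (F1 m1 ?p))
       = (\<Sum>m1\<in>Lambda. \<Sum>m2\<in>Lambda. UV1 \<omega> \<phi> m1 s * ?cu m2 * complex_of_real (F2 m2 m1 ?p))
         - (\<Sum>m\<in>Lambda. ?cu m * complex_of_real (F1 m ?p))"
      by (simp add: sum.distrib sum_negf sum_distrib_left mult.assoc sum_subtractf)
    have c: "(\<Sum>m1\<in>Lambda. \<Sum>m2\<in>Lambda. UV2 \<omega> \<phi> m2 m1 s * complex_of_real (\<Sum>m\<in>Lambda. u \<omega> \<phi> m s * F3 m m2 m1 ?p)
          + DUV2 \<omega> \<phi> m2 m1 s * complex_of_real (F2 m2 m1 ?p))
       = D2psi h b E d \<omega> \<phi> s ?p + (\<Sum>m1\<in>Lambda. \<Sum>m2\<in>Lambda. DUV2 \<omega> \<phi> m2 m1 s * complex_of_real (F2 m2 m1 ?p))"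
      unfolding D2e by (simp add: sum.distrib sum_distrib_left mult_ac)
    have e: "(\<Sum>m1\<in>Lambda. \<Sum>m2\<in>Lambda. UV1 \<omega> \<phi> m1 s * ?cu m2 * complex_of_real (F2 m2 m1 ?p))
        + (\<Sum>m1\<in>Lambda. \<Sum>m2\<in>Lambda. DUV2 \<omega> \<phi> m2 m1 s * complex_of_real (F2 m2 m1 ?p))
       = (\<Sum>m1\<in>Lambda. \<Sum>m2\<in>Lambda. cval m1 m2 * complex_of_real (F2 m2 m1 ?p))"
    proof -
      have "(\<Sum>m1\<in>Lambda. \<Sum>m2\<in>Lambda. UV1 \<omega> \<phi> m1 s * ?cu m2 * complex_of_real (F2 m2 m1 ?p))
        + (\<Sum>m1\<in>Lambda. \<Sum>m2\<in>Lambda. DUV2 \<omega> \<phi> m2 m1 s * complex_of_real (F2 m2 m1 ?p))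
        = (\<Sum>m1\<in>Lambda. \<Sum>m2\<in>Lambda. (UV1 \<omega> \<phi> m1 s * ?cu m2 + DUV2 \<omega> \<phi> m2 m1 s) * complex_of_real (F2 m2 m1 ?p))"
        by (simp add: sum.distrib[symmetric] distrib_right)
      also have "\<dots> = (\<Sum>m1\<in>Lambda. \<Sum>m2\<in>Lambda. cval m1 m2 * complex_of_real (F2 m2 m1 ?p))"
        by (intro sum.cong refl) (simp add: coef_L[OF \<omega>_pos \<omega>_distinct])
      finally show ?thesis .
    qed
    have y: "(\<Sum>m1\<in>Lambda. \<Sum>m2\<in>Lambda. cval m1 m2 * complex_of_real (F2 m2 m1 ?p))
       = complex_of_real (lie (Yf h b E d) (psi E d) ?p)"
      unfolding Y_sum lie_Y ..
    show ?thesis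
      unfolding Gd_def a b c using e y by (simp add: algebra_simps)
  qed
  have eqG: "(\<lambda>s. complex_of_real (psi E d (\<gamma> s)) - D1psi h b E d \<omega> \<phi> s (\<gamma> s)) =
     (\<lambda>s. complex_of_real (psi E d (\<gamma> s))
     + (\<Sum>m1\<in>Lambda. UV1 \<omega> \<phi> m1 s * complex_of_real (F1 m1 (\<gamma> s)))
     + (\<Sum>m1\<in>Lambda. \<Sum>m2\<in>Lambda. UV2 \<omega> \<phi> m2 m1 s * complex_of_real (F2 m2 m1 (\<gamma> s))))"
    by (simp add: D1e fun_eq_iff)
  show ?thesis unfolding eqG using dG Gd_eq by simp
qed

end


context Pfw begin

lemma main:
  fixes \<omega> \<phi> :: "'N \<Rightarrow> 'n \<Rightarrow> real" and \<gamma> :: "real \<Rightarrow> (real^'n)^'N" and t0 t :: real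
  assumes \<omega>_pos: "\<forall>i k. \<omega> i k > 0" and \<omega>_distinct: "inj (\<lambda>(i,k). \<omega> i k)"
    and \<gamma>_sol: "\<forall>s. (\<gamma> has_vector_derivative
        (\<Sum>m\<in>Lambda. u \<omega> \<phi> m s *\<^sub>R Xf h b E d m (\<gamma> s))) (at s)"
  shows "complex_of_real (psi E d (\<gamma> t)) =
      complex_of_real (psi E d (\<gamma> t0))
      + complex_of_real (LBINT s=t0..t. lie (Yf h b E d) (psi E d) (\<gamma> s))
      - D1psi h b E d \<omega> \<phi> t0 (\<gamma> t0)
      + D1psi h b E d \<omega> \<phi> t (\<gamma> t)
      + (LBINT s=t0..t. D2psi h b E d \<omega> \<phi> s (\<gamma> s))"
proof -
  define G where "G s = complex_of_real (psi E d (\<gamma> s)) - D1psi h b E d \<omega> \<phi> s (\<gamma> s)" for s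
  define fY where "fY s = lie (Yf h b E d) (psi E d) (\<gamma> s)" for s
  define fD where "fD s = D2psi h b E d \<omega> \<phi> s (\<gamma> s)" for s
  have gc: "isCont \<gamma> s" for s
    using \<gamma>_sol has_vector_derivative_continuous by blast
  have L: "(i,k,\<nu>) \<in> Lambda" if "\<nu> \<in> {1,2}" for i k \<nu> using that by (simp add: Lambda_def)
  have F2g: "isCont (\<lambda>s. F2 m' m (\<gamma> s)) s" if "m \<in> Lambda" "m' \<in> Lambda" for m m' s
    by (rule isCont_o2[OF gc F2_cont[OF that]])
  have F3g: "isCont (\<lambda>s. F3 m'' m' m (\<gamma> s)) s" if "m \<in> Lambda" "m' \<in> Lambda" "m'' \<in> Lambda" for m m' m'' s
    by (rule isCont_o2[OF gc F3_cont[OF Lambda_mn[OF that(1)] Lambda_mn[OF that(2)] Lambda_mn[OF that(3)]]])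
  have cY: "isCont (\<lambda>s. complex_of_real (fY s)) s" for s
  proof -
    have e: "(\<lambda>s. complex_of_real (fY s)) = (\<lambda>s. complex_of_real ((1/2) * (\<Sum>i\<in>UNIV. \<Sum>k\<in>UNIV.
        F2 (i,k,1) (i,k,2) (\<gamma> s) - F2 (i,k,2) (i,k,1) (\<gamma> s))))"
      by (simp add: fY_def lie_Y)
    show ?thesis unfolding e
      by (intro continuous_of_real isCont_mult continuous_const isCont_sum ballI isCont_diff F2g L) simp_all
  qed
  have cD: "isCont fD s" for s
  proof -
    have e: "fD = (\<lambda>s. \<Sum>m1\<in>Lambda. \<Sum>m2\<in>Lambda. \<Sum>m3\<in>Lambda.
      complex_of_real (u \<omega> \<phi> m3 s) * UV2 \<omega> \<phi> m2 m1 s * complex_of_real (F3 m3 m2 m1 (\<gamma> s)))"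
      by (simp add: fD_def D2e fun_eq_iff)
    show ?thesis unfolding e
      by (intro isCont_sum ballI isCont_mult u_cont UV2_cont continuous_of_real F3g)
  qed
  have dG: "(G has_vector_derivative (complex_of_real (fY x) + fD x)) (at x)" for x
    unfolding G_def fY_def fD_def using main_deriv[OF \<omega>_pos \<omega>_distinct \<gamma>_sol[rule_format, of x]] by simp
  have ftc: "(LBINT x=t0..t. complex_of_real (fY x) + fD x) = G t - G t0"
  proof (rule interval_integral_FTC_finite)
    show "continuous_on {min t0 t..max t0 t} (\<lambda>x. complex_of_real (fY x) + fD x)"
      by (intro continuous_at_imp_continuous_on ballI isCont_add cY cD)
    show "(G has_vector_derivative complex_of_real (fY x) + fD x) (at x within {min t0 t..max t0 t})" for x
      using dG by (rule has_vector_derivative_at_within)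
  qed
  have iY: "interval_lebesgue_integrable lborel t0 t (\<lambda>x. complex_of_real (fY x))"
    by (rule interval_integrable_isCont) (rule cY)
  have iD: "interval_lebesgue_integrable lborel t0 t fD"
    by (rule interval_integrable_isCont) (rule cD)
  have "(LBINT x=t0..t. complex_of_real (fY x) + fD x) = (LBINT x=t0..t. complex_of_real (fY x)) + (LBINT x=t0..t. fD x)"
    by (rule interval_lebesgue_integral_add(2)[OF iY iD])
  also have "(LBINT x=t0..t. complex_of_real (fY x)) = complex_of_real (LBINT x=t0..t. fY x)"
    by (rule interval_lebesgue_integral_of_real)
  finally have "G t - G t0 = complex_of_real (LBINT x=t0..t. fY x) + (LBINT x=t0..t. fD x)"
    using ftc by simp
  then show ?thesis unfolding G_def fY_def fD_def by (simp add: algebra_simps)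
qed

end


theorem proposition5p6:
  fixes E :: "'N::finite set set"
    and d :: "'N set \<Rightarrow> real"
    and b :: "'N \<Rightarrow> 'n::finite \<Rightarrow> real^'n"
    and h :: "nat \<Rightarrow> real \<Rightarrow> real"
    and \<omega> \<phi> :: "'N \<Rightarrow> 'n \<Rightarrow> real"
    and \<gamma> :: "real \<Rightarrow> (real^'n)^'N"
    and t0 t :: real
  assumes E_ne: "E \<noteq> {}"
    and E_edges: "\<forall>e\<in>E. card e = 2"
    and d_nonneg: "\<forall>e\<in>E. d e \<ge> 0"
    and b_orthonormal: "\<forall>i k l. b i k \<bullet> b i l = (if k = l then 1 else 0)"
    and h_zero: "\<forall>\<nu>\<in>{1,2}. \<forall>y\<le>0. h \<nu> y = 0"
    and h_bounded: "\<forall>\<nu>\<in>{1,2}. bounded (range (h \<nu>))"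
    and h_C2: "\<forall>\<nu>\<in>{1,2}. C2_pos (h \<nu>)"
    and h_div: "\<forall>\<nu>\<in>{1,2}. \<exists>C. eventually (\<lambda>y. \<bar>h \<nu> y / y\<bar> \<le> C) (at_right 0)"
    and h_d1: "\<forall>\<nu>\<in>{1,2}. \<exists>C. eventually (\<lambda>y. \<bar>deriv (h \<nu>) y\<bar> \<le> C) (at_right 0)"
    and h_d2: "\<forall>\<nu>\<in>{1,2}. \<exists>C. eventually (\<lambda>y. \<bar>deriv (deriv (h \<nu>)) y * y\<bar> \<le> C) (at_right 0)"
    and h_wronski: "\<exists>r' c'. r' > 0 \<and> c' > 0 \<and> (\<forall>y\<in>{0<..r'}.
        deriv (h 2) y * h 1 y - deriv (h 1) y * h 2 y \<le> - c' * y)"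
    and \<omega>_pos: "\<forall>i k. \<omega> i k > 0"
    and \<omega>_distinct: "inj (\<lambda>(i,k). \<omega> i k)"
    and \<gamma>_sol: "\<forall>s. (\<gamma> has_vector_derivative
        (\<Sum>m\<in>Lambda. u \<omega> \<phi> m s *\<^sub>R Xf h b E d m (\<gamma> s))) (at s)"
  shows "complex_of_real (psi E d (\<gamma> t)) =
      complex_of_real (psi E d (\<gamma> t0))
      + complex_of_real (LBINT s=t0..t. lie (Yf h b E d) (psi E d) (\<gamma> s))
      - D1psi h b E d \<omega> \<phi> t0 (\<gamma> t0)
      + D1psi h b E d \<omega> \<phi> t (\<gamma> t)
      + (LBINT s=t0..t. D2psi h b E d \<omega> \<phi> s (\<gamma> s))"
proof -
  interpret P: Pfw E d b h
    by (rule Pfw.intro) (fact E_edges, fact h_zero, fact h_C2, fact h_div, fact h_d1, fact h_d2)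
  show ?thesis by (rule P.main[OF \<omega>_pos \<omega>_distinct \<gamma>_sol])
qed

end
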